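(* Let $n\in\mathbb{N}_0$ and let $f\in C^{2n}(\mathbb{R}^d,\mathbb{R})$, $a\in C^{2n}(\mathbb{R}^d,\mathbb{R}^d)$, $b\in C^{2n}(\mathbb{R}^d,\mathbb{R}^{d\times m})$. Then for every $x_0\in\mathbb{R}^d$ $$(L^0)^n f(x_0)=\sum_{\substack{t\in LTS(I)\\ \rho(t)=n}}\ \sum_{j_1,\dots,j_{s(t)/2}=1}^m\frac{F(t)(x_0)}{2^{s(t)/2}},$$ where $L^0=\sum_{k=1}^d a^k\frac{\partial}{\partial x^k}+\frac12\sum_{k,l=1}^d\sum_{j=1}^m b^{k,j}b^{l,j}\frac{\partial^2}{\partial x^k\partial x^l}$ and $(L^0)^0$ is the identity.
   Context: Fix $d,m\ge1$, $f:\mathbb{R}^d\to\mathbb{R}$, $a:\mathbb{R}^d\to\mathbb{R}^d$, $b:\mathbb{R}^d\to\mathbb{R}^{d\times m}$ with columns $b^j$ and entries $b^{k,j}$. A monotonically labelled coloured tree with $l$ nodes consists of nodes $1,\dots,l$, a father map $t':\{2,\dots,l\}\to\{1,\dots,l-1\}$ with $t'(i)<i$ (node 1 is the root), and a colour for each node: $\gamma$ (root), $\tau$ (deterministic) or $\sigma_j$ (stochastic, with index $j$). $LTS(I)$ is the set of such trees obtainable as follows: start with the single node $1$ coloured $\gamma$; at each step, if the current tree has $\lambda$ nodes and $k-1$ pairs of stochastic nodes have been added so far, either (a) add node $\lambda+1$ coloured $\tau$ with father any node in $\{1,\dots,\lambda\}$, or (b) add nodes $\lambda+1,\lambda+2$,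 both coloured $\sigma_{j_k}$ (with $j_k$ a formal index variable), with fathers $t'(\lambda+1),t'(\lambda+2)\in\{1,\dots,\lambda\}$ (so neither new node is the father of the other). For a tree $t$: $d(t)$ = number of $\tau$-nodes, $s(t)$ = number of stochastic nodes (always even, with index variables $j_1,\dots,j_{s(t)/2}$), order $\rho(t)=d(t)+s(t)/2$. In the sums the index variables $j_1,\dots,j_{s(t)/2}$ range over $\{1,\dots,m\}$. Elementary differential: for $g$ scalar or vector valued, $g^{(k)}(x)(v_1,\dots,v_k)$ has $I$-th component $\sum_{J_1,\dots,J_k}\frac{\partial^k g^I(x)}{\partial x^{J_1}\cdots\partial x^{J_k}}v_1^{J_1}\cdots v_k^{J_k}$; for a tree with index values fixed, define recursively for node $i$ with children $c_1,\dots,c_k$: $F_i(x)=g_i^{(k)}(x)(F_{c_1}(x),\dots,F_{c_k}(x))$, where $g_i=f$ for colour $\gamma$, $g_i=a$ for $\tau$, $g_i=b^j$ for $\sigma_j$; $F(t):=F_1$. *)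

theory Defs
  imports "HOL-Analysis.Analysis"
begin

definition pd :: "'d::finite \<Rightarrow> (real^'d \<Rightarrow> real) \<Rightarrow> real^'d \<Rightarrow> real" where
  "pd k h x = deriv (\<lambda>s. h (x + s *\<^sub>R axis k 1)) 0"

fun Ck :: "nat \<Rightarrow> (real^'d::finite \<Rightarrow> real) \<Rightarrow> bool" where
  "Ck 0 h = continuous_on UNIV h"
| "Ck (Suc n) h = (continuous_on UNIV h
     \<and> (\<forall>k x. \<exists>D. ((\<lambda>s. h (x + s *\<^sub>R axis k 1)) has_real_derivative D) (at 0))
     \<and> (\<forall>k. Ck n (pd k h)))"

fun pds :: "(real^'d::finite \<Rightarrow> real) \<Rightarrow> 'd list \<Rightarrow> real^'d \<Rightarrow> real" where
  "pds h [] = h"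
| "pds h (J # Js) = pd J (pds h Js)"

definition L0 :: "(real^'d::finite \<Rightarrow> real^'d) \<Rightarrow> (real^'d \<Rightarrow> real^'m::finite^'d)
    \<Rightarrow> (real^'d \<Rightarrow> real) \<Rightarrow> real^'d \<Rightarrow> real" where
  "L0 a b h x = (\<Sum>k\<in>UNIV. a x $ k * pd k h x)
     + 1/2 * (\<Sum>k\<in>UNIV. \<Sum>l\<in>UNIV. \<Sum>j\<in>UNIV. b x $ k $ j * b x $ l $ j * pd k (pd l h) x)"

datatype colour = Gamma | Tau | Sigma nat

text \<open>A tree with l nodes is the list whose (i-1)-th entry is (father of node i, colour of node i),
  nodes labelled 1..l; the root entry is (0, Gamma) (father 0 is a dummy).
  Colour Sigma k means sigma_{j_k}.\<close>
type_synonym tree = "(nat \<times> colour) list"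

definition par :: "tree \<Rightarrow> nat \<Rightarrow> nat" where "par t i = fst (t ! (i - 1))"
definition col :: "tree \<Rightarrow> nat \<Rightarrow> colour" where "col t i = snd (t ! (i - 1))"

fun is_sigma :: "colour \<Rightarrow> bool" where
  "is_sigma (Sigma _) = True" | "is_sigma _ = False"

definition s_nodes :: "tree \<Rightarrow> nat" where "s_nodes t = length (filter (\<lambda>e. is_sigma (snd e)) t)"
definition d_nodes :: "tree \<Rightarrow> nat" where "d_nodes t = length (filter (\<lambda>e. snd e = Tau) t)"
definition rho :: "tree \<Rightarrow> nat" where "rho t = d_nodes t + s_nodes t div 2"

inductive_set LTS :: "tree set" where
  root: "[(0, Gamma)] \<in> LTS"
| tau: "\<lbrakk>t \<in> LTS; 1 \<le> p; p \<le> length t\<rbrakk> \<Longrightarrow> t @ [(p, Tau)] \<in> LTS"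
| sigma: "\<lbrakk>t \<in> LTS; 1 \<le> p; p \<le> length t; 1 \<le> q; q \<le> length t\<rbrakk> \<Longrightarrow>
     t @ [(p, Sigma (s_nodes t div 2 + 1)), (q, Sigma (s_nodes t div 2 + 1))] \<in> LTS"

definition children :: "tree \<Rightarrow> nat \<Rightarrow> nat list" where
  "children t i = filter (\<lambda>c. par t c = i) [Suc i..<Suc (length t)]"

definition dapp :: "(real^'d::finite \<Rightarrow> real) \<Rightarrow> (real^'d) list \<Rightarrow> real^'d \<Rightarrow> real" where
  "dapp h vs x = (\<Sum>J \<in> {..<length vs} \<rightarrow>\<^sub>E UNIV.
      pds h (map J [0..<length vs]) x * (\<Prod>r<length vs. vs ! r $ J r))"

function nodeF :: "(real^'d::finite \<Rightarrow> real^'d) \<Rightarrow> (real^'d \<Rightarrow> real^'m::finite^'d) \<Rightarrow> tree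
    \<Rightarrow> (nat \<Rightarrow> 'm) \<Rightarrow> nat \<Rightarrow> real^'d \<Rightarrow> real^'d" where
  "nodeF a b t js i x = (case col t i of
      Tau \<Rightarrow> (\<chi> I. dapp (\<lambda>y. a y $ I) (map (\<lambda>c. nodeF a b t js c x) (children t i)) x)
    | Sigma k \<Rightarrow> (\<chi> I. dapp (\<lambda>y. b y $ I $ js k) (map (\<lambda>c. nodeF a b t js c x) (children t i)) x)
    | Gamma \<Rightarrow> 0)"
  by pat_completeness auto
termination
  by (relation "Wellfounded.measure (\<lambda>(a, b, t, js, i, x). Suc (length t) - i)") (auto simp: children_def)

text \<open>F(t)(x) for the tree t with index values j_k = js k.\<close>
definition elemF :: "(real^'d::finite \<Rightarrow> real) \<Rightarrow> (real^'d \<Rightarrow> real^'d) \<Rightarrow> (real^'d \<Rightarrow> real^'m::finite^'d)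
    \<Rightarrow> tree \<Rightarrow> (nat \<Rightarrow> 'm) \<Rightarrow> real^'d \<Rightarrow> real" where
  "elemF f a b t js x = dapp f (map (\<lambda>c. nodeF a b t js c x) (children t 1)) x"

end

theory Submission
  imports Defs
begin


definition lined :: "(real^'d::finite \<Rightarrow> real) \<Rightarrow> bool" where
 "lined h \<longleftrightarrow> (\<forall>k x. \<exists>D. ((\<lambda>s. h (x + s *\<^sub>R axis k 1)) has_real_derivative D) (at 0))"

lemma Ck_cont: "Ck m h \<Longrightarrow> continuous_on UNIV h" by (cases m) auto
lemma Ck_lined: "Ck (Suc m) h \<Longrightarrow> lined h" by (simp add: lined_def)
lemma Ck_pd: "Ck (Suc m) h \<Longrightarrow> Ck m (pd k h)" by simp

lemma pd_eqI: "((\<lambda>s. h (x + s *\<^sub>R axis k 1)) has_real_derivative D) (at 0) \<Longrightarrow> pd k h x = D"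
  by (simp add: pd_def DERIV_imp_deriv)

lemma pd_has: "lined h \<Longrightarrow> ((\<lambda>s. h (x + s *\<^sub>R axis k 1)) has_real_derivative pd k h x) (at 0)"
  unfolding lined_def by (metis pd_eqI)

lemma pd_has_at: assumes "lined h"
  shows "((\<lambda>s. h (x + s *\<^sub>R axis k 1)) has_real_derivative pd k h (x + s0 *\<^sub>R axis k 1)) (at s0)"
proof -
  from pd_has[OF assms, of "x + s0 *\<^sub>R axis k 1" k]
  have "((\<lambda>s. h (x + (s + s0) *\<^sub>R axis k 1)) has_real_derivative pd k h (x + s0 *\<^sub>R axis k 1)) (at 0)"
    by (simp add: scaleR_add_left algebra_simps)
  then show ?thesis using DERIV_shift[of "\<lambda>s. h (x + s *\<^sub>R axis k 1)" _ 0 s0] by simp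
qed

lemma lined_I: "(\<And>x k. ((\<lambda>s. h (x + s *\<^sub>R axis k 1)) has_real_derivative D x k) (at 0)) \<Longrightarrow> lined h"
  unfolding lined_def by blast

lemma pd_const: "pd k (\<lambda>x. c) x = 0"
  by (rule pd_eqI) simp
lemma lined_const: "lined (\<lambda>x. c)"
  by (rule lined_I[where D="\<lambda>x k. 0"]) simp

lemma pd_add: "lined g \<Longrightarrow> lined h \<Longrightarrow> pd k (\<lambda>x. g x + h x) x = pd k g x + pd k h x"
  by (rule pd_eqI) (intro DERIV_add pd_has)
lemma lined_add: "lined g \<Longrightarrow> lined h \<Longrightarrow> lined (\<lambda>x. g x + h x)"
  by (rule lined_I[where D="\<lambda>x k. pd k g x + pd k h x"]) (intro DERIV_add pd_has)

lemma pd_mult: "lined g \<Longrightarrow> lined h \<Longrightarrow> pd k (\<lambda>x. g x * h x) x = pd k g x * h x + g x * pd k h x"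
  by (rule pd_eqI) (auto intro!: derivative_eq_intros pd_has)
lemma lined_mult: "lined g \<Longrightarrow> lined h \<Longrightarrow> lined (\<lambda>x. g x * h x)"
  by (rule lined_I) (rule DERIV_mult[OF pd_has pd_has])

lemma pd_cmult: "lined h \<Longrightarrow> pd k (\<lambda>x. c * h x) x = c * pd k h x"
  by (rule pd_eqI) (auto intro!: derivative_eq_intros pd_has)
lemma lined_cmult: "lined h \<Longrightarrow> lined (\<lambda>x. c * h x)"
  by (rule lined_I[where D="\<lambda>x k. c * pd k h x"]) (auto intro!: derivative_eq_intros pd_has)

lemma pd_sum: "(\<And>i. i \<in> A \<Longrightarrow> lined (F i)) \<Longrightarrow> pd k (\<lambda>x. \<Sum>i\<in>A. F i x) x = (\<Sum>i\<in>A. pd k (F i) x)"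
  by (rule pd_eqI) (rule DERIV_sum, rule pd_has, blast)
lemma lined_sum: "(\<And>i. i \<in> A \<Longrightarrow> lined (F i)) \<Longrightarrow> lined (\<lambda>x. \<Sum>i\<in>A. F i x)"
  by (rule lined_I) (rule DERIV_sum, rule pd_has, blast)

lemma prod_has: "(\<And>i. i \<in> A \<Longrightarrow> lined (F i)) \<Longrightarrow>
   ((\<lambda>s. \<Prod>i\<in>A. F i (x + s *\<^sub>R axis k 1)) has_real_derivative
     (\<Sum>i\<in>A. pd k (F i) x * (\<Prod>j\<in>A-{i}. F j x))) (at 0)"
proof -
  assume "\<And>i. i \<in> A \<Longrightarrow> lined (F i)"
  then have "((\<lambda>u. \<Prod>i\<in>A. (\<lambda>i s. F i (x + s *\<^sub>R axis k 1)) i u) has_field_derivative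
     (\<Sum>i\<in>A. pd k (F i) x * (\<Prod>j\<in>A-{i}. (\<lambda>i s. F i (x + s *\<^sub>R axis k 1)) j 0))) (at 0)"
    by (intro has_field_derivative_prod) (simp add: pd_has)
  then show ?thesis by simp
qed
lemma pd_prod: "(\<And>i. i \<in> A \<Longrightarrow> lined (F i)) \<Longrightarrow>
   pd k (\<lambda>x. \<Prod>i\<in>A. F i x) x = (\<Sum>i\<in>A. pd k (F i) x * (\<Prod>j\<in>A-{i}. F j x))"
  by (rule pd_eqI) (rule prod_has)
lemma lined_prod: "(\<And>i. i \<in> A \<Longrightarrow> lined (F i)) \<Longrightarrow> lined (\<lambda>x. \<Prod>i\<in>A. F i x)"
  by (rule lined_I) (rule prod_has)

lemma Ck_mono: "Ck (Suc m) h \<Longrightarrow> Ck m h"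
proof (induction m arbitrary: h)
  case 0 then show ?case by simp
next
  case (Suc m) then show ?case by (metis Ck.simps(2))
qed

lemma Ck_le_aux: "Ck (m + j) h \<Longrightarrow> Ck m h"
  by (induction j) (simp, metis Ck_mono add_Suc_right)
lemma Ck_le: "m \<le> m' \<Longrightarrow> Ck m' h \<Longrightarrow> Ck m h"
  by (metis Ck_le_aux le_add_diff_inverse)
  
lemma Ck_lined': "Ck m h \<Longrightarrow> 1 \<le> m \<Longrightarrow> lined h"
  by (cases m) (auto simp: lined_def)

lemma Ck_const: "Ck m (\<lambda>x::real^'d::finite. c)"
proof (induction m arbitrary: c)
  case 0 then show ?case by simp
next
  case (Suc m)
  have pe: "pd k (\<lambda>x::real^'d. c) = (\<lambda>x. 0)" for k by (rule ext) (rule pd_const)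
  have "Ck m (pd k (\<lambda>x::real^'d. c))" for k by (subst pe) (rule Suc.IH)
  then show ?case using lined_const[unfolded lined_def] by (auto simp: continuous_on_const)
qed

lemma Ck_add: "Ck m g \<Longrightarrow> Ck m h \<Longrightarrow> Ck m (\<lambda>x. g x + h x)"
proof (induction m arbitrary: g h)
  case 0 then show ?case by (simp add: continuous_on_add)
next
  case (Suc m)
  have l: "lined g" "lined h" using Suc.prems by (auto intro: Ck_lined)
  have "pd k (\<lambda>x. g x + h x) = (\<lambda>x. pd k g x + pd k h x)" for k
    by (rule ext) (rule pd_add[OF l])
  then show ?case using Suc lined_add[OF l, unfolded lined_def] by (auto intro: continuous_on_add)
qed

lemma Ck_mult: "Ck m g \<Longrightarrow> Ck m h \<Longrightarrow> Ck m (\<lambda>x. g x * h x)"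
proof (induction m arbitrary: g h)
  case 0 then show ?case by (simp add: continuous_on_mult)
next
  case (Suc m)
  have l: "lined g" "lined h" using Suc.prems by (auto intro: Ck_lined)
  have "pd k (\<lambda>x. g x * h x) = (\<lambda>x. pd k g x * h x + g x * pd k h x)" for k
    by (rule ext) (rule pd_mult[OF l])
  moreover have "Ck m (\<lambda>x. pd k g x * h x + g x * pd k h x)" for k
    using Suc by (intro Ck_add Suc.IH) (auto intro: Ck_mono)
  ultimately show ?case using Suc.prems lined_mult[OF l, unfolded lined_def] by (auto intro: continuous_on_mult)
qed

lemma Ck_sum: "(\<And>i. i \<in> A \<Longrightarrow> Ck m (F i)) \<Longrightarrow> Ck m (\<lambda>x. \<Sum>i\<in>A. F i x)"
proof (induction A rule: infinite_finite_induct)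
  case (infinite A) then show ?case by (simp add: Ck_const)
next
  case empty then show ?case by (simp add: Ck_const)
next
  case (insert a A) then show ?case by (simp add: Ck_add)
qed

lemma Ck_prod: "(\<And>i. i \<in> A \<Longrightarrow> Ck m (F i)) \<Longrightarrow> Ck m (\<lambda>x. \<Prod>i\<in>A. F i x)"
proof (induction A rule: infinite_finite_induct)
  case (infinite A) then show ?case by (simp add: Ck_const)
next
  case empty then show ?case by (simp add: Ck_const)
next
  case (insert a A) then show ?case by (simp add: Ck_mult)
qed

lemma Ck_pds: "Ck m h \<Longrightarrow> length Js \<le> m \<Longrightarrow> Ck (m - length Js) (pds h Js)"
proof (induction Js)
  case Nil then show ?case by simp
next
  case (Cons J Js)
  then have "Ck (Suc (m - length (J # Js))) (pds h Js)"
    by (metis Suc_diff_Suc Suc_le_lessD length_Cons less_or_eq_imp_le)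
  then show ?case by simp
qed

lemma line_mvt: assumes "lined g" "0 < r"
  shows "\<exists>\<sigma>. 0 < \<sigma> \<and> \<sigma> < r \<and> g (y + r *\<^sub>R axis k 1) - g y = r * pd k g (y + \<sigma> *\<^sub>R axis k 1)"
  using MVT2[of 0 r "\<lambda>s. g (y + s *\<^sub>R axis k 1)" "\<lambda>s. pd k g (y + s *\<^sub>R axis k 1)"]
    pd_has_at[OF assms(1)] assms(2) by auto

lemma schwarz_aux: assumes "Ck 2 h" "0 < r"
  shows "\<exists>y. norm (y - x) \<le> 2*r \<and> h (x + r *\<^sub>R axis k 1 + r *\<^sub>R axis l 1) - h (x + r *\<^sub>R axis k 1)
     - h (x + r *\<^sub>R axis l 1) + h x = r^2 * pd l (pd k h) y"
proof -
  have lh: "lined h" using assms(1) by (intro Ck_lined') auto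
  have lk: "lined (pd k h)" using assms(1) by (intro Ck_lined'[of 1]) (auto simp: numeral_2_eq_2)
  define \<phi> where "\<phi> u = h (x + r *\<^sub>R axis l 1 + u *\<^sub>R axis k 1) - h (x + u *\<^sub>R axis k 1)" for u
  have "DERIV \<phi> u :> pd k h (x + r *\<^sub>R axis l 1 + u *\<^sub>R axis k 1) - pd k h (x + u *\<^sub>R axis k 1)" for u
    unfolding \<phi>_def by (intro DERIV_diff pd_has_at lh)
  then obtain \<sigma> where s: "0 < \<sigma>" "\<sigma> < r" and
    e1: "\<phi> r - \<phi> 0 = r * (pd k h (x + r *\<^sub>R axis l 1 + \<sigma> *\<^sub>R axis k 1) - pd k h (x + \<sigma> *\<^sub>R axis k 1))"
    using MVT2[of 0 r \<phi> "\<lambda>u. pd k h (x + r *\<^sub>R axis l 1 + u *\<^sub>R axis k 1) - pd k h (x + u *\<^sub>R axis k 1)"] assms(2) by auto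
  obtain \<tau> where t: "0 < \<tau>" "\<tau> < r" and
    e2: "pd k h (x + \<sigma> *\<^sub>R axis k 1 + r *\<^sub>R axis l 1) - pd k h (x + \<sigma> *\<^sub>R axis k 1)
       = r * pd l (pd k h) (x + \<sigma> *\<^sub>R axis k 1 + \<tau> *\<^sub>R axis l 1)"
    using line_mvt[OF lk assms(2)] by blast
  let ?y = "x + \<sigma> *\<^sub>R axis k 1 + \<tau> *\<^sub>R axis l 1"
  have "norm (?y - x) \<le> norm (\<sigma> *\<^sub>R axis k (1::real)) + norm (\<tau> *\<^sub>R axis l (1::real))"
    by (simp add: norm_triangle_ineq add.assoc del: norm_scaleR)
  also have "\<dots> \<le> 2 * r" using s t by simp
  finally have n: "norm (?y - x) \<le> 2 * r" .
  have "h (x + r *\<^sub>R axis k 1 + r *\<^sub>R axis l 1) - h (x + r *\<^sub>R axis k 1)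
     - h (x + r *\<^sub>R axis l 1) + h x = \<phi> r - \<phi> 0"
    unfolding \<phi>_def by (simp add: algebra_simps)
  also have "\<dots> = r^2 * pd l (pd k h) ?y"
    using e1 e2 by (simp add: algebra_simps power2_eq_square)
  finally show ?thesis using n by blast
qed

lemma schwarz: assumes "Ck 2 h" shows "pd l (pd k h) x = pd k (pd l h) x"
proof -
  have c1: "isCont (pd l (pd k h)) x" and c2: "isCont (pd k (pd l h)) x"
    using assms by (auto simp: numeral_2_eq_2 continuous_on_eq_continuous_at)
  have "\<bar>pd l (pd k h) x - pd k (pd l h) x\<bar> < 2 * e" if e: "e > 0" for e
  proof -
    obtain d1 where d1: "d1 > 0" "\<And>y. y \<noteq> x \<and> norm (y - x) < d1 \<Longrightarrow> norm (pd l (pd k h) y - pd l (pd k h) x) < e"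
      using c1 e unfolding isCont_def LIM_eq by blast
    obtain d2 where d2: "d2 > 0" "\<And>y. y \<noteq> x \<and> norm (y - x) < d2 \<Longrightarrow> norm (pd k (pd l h) y - pd k (pd l h) x) < e"
      using c2 e unfolding isCont_def LIM_eq by blast
    define r where "r = min d1 d2 / 3"
    have r: "r > 0" using d1 d2 by (simp add: r_def)
    obtain y1 where y1: "norm (y1 - x) \<le> 2*r" "h (x + r *\<^sub>R axis k 1 + r *\<^sub>R axis l 1) - h (x + r *\<^sub>R axis k 1)
     - h (x + r *\<^sub>R axis l 1) + h x = r^2 * pd l (pd k h) y1"
      using schwarz_aux[OF assms r] by blast
    obtain y2 where y2: "norm (y2 - x) \<le> 2*r" "h (x + r *\<^sub>R axis l 1 + r *\<^sub>R axis k 1) - h (x + r *\<^sub>R axis l 1)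
     - h (x + r *\<^sub>R axis k 1) + h x = r^2 * pd k (pd l h) y2"
      using schwarz_aux[OF assms r] by blast
    have "r^2 * pd l (pd k h) y1 = r^2 * pd k (pd l h) y2"
      using y1(2) y2(2) by (simp add: algebra_simps)
    then have eq: "pd l (pd k h) y1 = pd k (pd l h) y2" using r by simp
    have a1: "\<bar>pd l (pd k h) y1 - pd l (pd k h) x\<bar> < e"
    proof (cases "y1 = x")
      case False
      have "norm (y1 - x) < d1" using y1(1) d1(1) d2(1) by (auto simp: r_def min_def split: if_splits)
      then show ?thesis using d1(2)[of y1] False by simp
    qed (use e in simp)
    have a2: "\<bar>pd k (pd l h) y2 - pd k (pd l h) x\<bar> < e"
    proof (cases "y2 = x")
      case False
      have "norm (y2 - x) < d2" using y2(1) d1(1) d2(1) by (auto simp: r_def min_def split: if_splits)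
      then show ?thesis using d2(2)[of y2] False by simp
    qed (use e in simp)
    show ?thesis using a1 a2 eq by linarith
  qed
  from this[of "\<bar>pd l (pd k h) x - pd k (pd l h) x\<bar> / 2"] show ?thesis by fastforce
qed

lemma pd_fun_swap: "Ck 2 H \<Longrightarrow> pd k (pd l H) = pd l (pd k H)"
  by (rule ext) (rule schwarz)

lemma pds_rot: "Ck (Suc (length Js)) h \<Longrightarrow> pds h (k # Js) = pds h (Js @ [k])"
proof (induction Js)
  case Nil then show ?case by simp
next
  case (Cons J Js)
  have "Ck (Suc (Suc (length Js)) - length Js) (pds h Js)"
    using Ck_pds[OF Cons.prems, of Js] by simp
  then have c2: "Ck 2 (pds h Js)" by (simp add: numeral_2_eq_2)
  have p: "Ck (Suc (Suc (length Js))) h" using Cons.prems by (simp only: length_Cons)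
  have ih: "pds h (k # Js) = pds h (Js @ [k])" by (rule Cons.IH[OF Ck_mono[OF p]])
  have "pds h (k # J # Js) = pd k (pd J (pds h Js))" by simp
  also have "\<dots> = pd J (pd k (pds h Js))" by (rule pd_fun_swap[OF c2])
  also have "\<dots> = pd J (pds h (Js @ [k]))" using ih by simp
  finally show ?case by simp
qed

lemma sum_PiE_insert:
  assumes "x \<notin> S"
  shows "(\<Sum>g\<in>Pi\<^sub>E (insert x S) T. F g) = (\<Sum>y\<in>T x. \<Sum>g\<in>Pi\<^sub>E S T. F (g(x:=y)))"
proof -
  have "(\<Sum>g\<in>Pi\<^sub>E (insert x S) T. F g) = (\<Sum>p\<in>T x \<times> Pi\<^sub>E S T. F ((\<lambda>(y, g). g(x := y)) p))"
    unfolding PiE_insert_eq by (rule sum.reindex[OF inj_combinator[OF assms], unfolded comp_def])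
  also have "\<dots> = (\<Sum>y\<in>T x. \<Sum>g\<in>Pi\<^sub>E S T. F (g(x:=y)))"
    by (simp add: sum.cartesian_product split_def)
  finally show ?thesis .
qed

lemma dapp_snoc:
  fixes vs :: "(real^'d::finite) list"
  shows "dapp h (vs @ [w]) x = (\<Sum>k\<in>UNIV. w $ k * (\<Sum>J\<in>{..<length vs} \<rightarrow>\<^sub>E UNIV.
      pds h (map J [0..<length vs] @ [k]) x * (\<Prod>r<length vs. vs ! r $ J r)))"
proof -
  let ?m = "length vs"
  have "dapp h (vs @ [w]) x = (\<Sum>J\<in>Pi\<^sub>E (insert ?m {..<?m}) (\<lambda>_. UNIV).
      pds h (map J [0..<Suc ?m]) x * (\<Prod>r<Suc ?m. (vs @ [w]) ! r $ J r))"
    unfolding dapp_def by (simp add: lessThan_Suc)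
  also have "\<dots> = (\<Sum>k\<in>UNIV. \<Sum>J\<in>{..<?m} \<rightarrow>\<^sub>E UNIV.
      pds h (map (J(?m := k)) [0..<Suc ?m]) x * (\<Prod>r<Suc ?m. (vs @ [w]) ! r $ (J(?m := k)) r))"
    by (rule sum_PiE_insert) simp
  also have "\<dots> = (\<Sum>k\<in>UNIV. \<Sum>J\<in>{..<?m} \<rightarrow>\<^sub>E UNIV.
      w $ k * (pds h (map J [0..<?m] @ [k]) x * (\<Prod>r<?m. vs ! r $ J r)))"
  proof (intro sum.cong refl)
    fix k :: 'd and J :: "nat \<Rightarrow> 'd"
    have "map (J(?m := k)) [0..<Suc ?m] = map J [0..<?m] @ [k]" by simp
    moreover have "(\<Prod>r<?m. (vs @ [w]) ! r $ (J(?m := k)) r) = (\<Prod>r<?m. vs ! r $ J r)"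
      by (intro prod.cong) (auto simp: nth_append)
    ultimately show "pds h (map (J(?m := k)) [0..<Suc ?m]) x * (\<Prod>r<Suc ?m. (vs @ [w]) ! r $ (J(?m := k)) r)
      = w $ k * (pds h (map J [0..<?m] @ [k]) x * (\<Prod>r<?m. vs ! r $ J r))"
      by (simp add: algebra_simps)
  qed
  finally show ?thesis by (simp add: sum_distrib_left)
qed

lemma prod_upd: "r < length vs \<Longrightarrow>
  (\<Prod>r'<length vs. vs[r := w] ! r' $ J r') = w $ J r * (\<Prod>r'\<in>{..<length vs}-{r}. vs ! r' $ J r')"
proof -
  assume r: "r < length vs"
  have "(\<Prod>r'<length vs. vs[r := w] ! r' $ J r') = vs[r := w] ! r $ J r * (\<Prod>r'\<in>{..<length vs}-{r}. vs[r := w] ! r' $ J r')"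
    using r by (subst prod.remove[of _ r]) auto
  also have "(\<Prod>r'\<in>{..<length vs}-{r}. vs[r := w] ! r' $ J r') = (\<Prod>r'\<in>{..<length vs}-{r}. vs ! r' $ J r')"
    by (intro prod.cong) auto
  finally show ?thesis using r by simp
qed

lemma dapp_upd_sum: assumes "r < length vs"
  shows "dapp h (vs[r := (\<Sum>p\<in>P. W p)]) x = (\<Sum>p\<in>P. dapp h (vs[r := W p]) x)"
proof -
  have "dapp h (vs[r := (\<Sum>p\<in>P. W p)]) x = (\<Sum>J\<in>{..<length vs} \<rightarrow>\<^sub>E UNIV. \<Sum>p\<in>P.
      pds h (map J [0..<length vs]) x * (W p $ J r * (\<Prod>r'\<in>{..<length vs}-{r}. vs ! r' $ J r')))"
    unfolding dapp_def using assms
    by (simp add: prod_upd sum_component sum_distrib_left sum_distrib_right)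
  also have "\<dots> = (\<Sum>p\<in>P. dapp h (vs[r := W p]) x)"
    unfolding dapp_def using assms by (subst sum.swap) (simp add: prod_upd)
  finally show ?thesis .
qed




lemma dapp_map: "dapp h (map (\<lambda>r. V r y) [0..<m]) x =
  (\<Sum>J\<in>{..<m} \<rightarrow>\<^sub>E UNIV. pds h (map J [0..<m]) x * (\<Prod>r<m. V r y $ J r))"
  unfolding dapp_def by (intro sum.cong refl arg_cong2[where f="(*)"] prod.cong) auto

lemma Ck_dapp: assumes "Ck (q + m) h" "\<And>r J. r < m \<Longrightarrow> Ck q (\<lambda>y. V r y $ J)"
  shows "Ck q (\<lambda>y. dapp h (map (\<lambda>r. V r y) [0..<m]) y)"
  unfolding dapp_map
proof (intro Ck_sum Ck_mult Ck_prod)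
  fix J :: "nat \<Rightarrow> 'a"
  show "Ck q (pds h (map J [0..<m]))" using Ck_pds[OF assms(1), of "map J [0..<m]"] by simp
qed (use assms(2) in auto)

lemma dapp_upd_eq: "r < m \<Longrightarrow> dapp h ((map (\<lambda>r. V r x) [0..<m])[r := w]) x =
  (\<Sum>J\<in>{..<m} \<rightarrow>\<^sub>E UNIV. pds h (map J [0..<m]) x * (w $ J r * (\<Prod>r'\<in>{..<m}-{r}. V r' x $ J r')))"
proof -
  assume r: "r < m"
  let ?vs = "map (\<lambda>r. V r x) [0..<m]"
  have "dapp h (?vs[r := w]) x = (\<Sum>J\<in>{..<m} \<rightarrow>\<^sub>E UNIV. pds h (map J [0..<m]) x * (\<Prod>r'<length ?vs. ?vs[r := w] ! r' $ J r'))"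
    unfolding dapp_def by simp
  also have "\<dots> = (\<Sum>J\<in>{..<m} \<rightarrow>\<^sub>E UNIV. pds h (map J [0..<m]) x * (w $ J r * (\<Prod>r'\<in>{..<m}-{r}. ?vs ! r' $ J r')))"
  proof (intro sum.cong refl arg_cong2[where f="(*)"])
    fix J :: "nat \<Rightarrow> 'a"
    have "r < length ?vs" using r by simp
    from prod_upd[OF this, of w J] show "(\<Prod>r'<length ?vs. ?vs[r := w] ! r' $ J r') = w $ J r * (\<Prod>r'\<in>{..<m}-{r}. ?vs ! r' $ J r')"
      by (simp only: length_map length_upt diff_zero)
  qed
  also have "\<dots> = (\<Sum>J\<in>{..<m} \<rightarrow>\<^sub>E UNIV. pds h (map J [0..<m]) x * (w $ J r * (\<Prod>r'\<in>{..<m}-{r}. V r' x $ J r')))"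
    by (intro sum.cong refl arg_cong2[where f="(*)"] prod.cong) auto
  finally show ?thesis .
qed

lemma dapp_deriv:
  fixes V :: "nat \<Rightarrow> real^'d::finite \<Rightarrow> real^'d" and v :: "real^'d"
  assumes h: "Ck (Suc m) h" and V: "\<And>r J. r < m \<Longrightarrow> lined (\<lambda>y. V r y $ J)"
  shows "(\<Sum>k\<in>UNIV. v$k * pd k (\<lambda>y. dapp h (map (\<lambda>r. V r y) [0..<m]) y) x) =
    dapp h (map (\<lambda>r. V r x) [0..<m] @ [v]) x +
    (\<Sum>r<m. dapp h ((map (\<lambda>r. V r x) [0..<m])[r := (\<chi> J. \<Sum>k\<in>UNIV. v$k * pd k (\<lambda>y. V r y $ J) x)]) x)"
proof -
  let ?P = "{..<m} \<rightarrow>\<^sub>E (UNIV::'d set)"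
  let ?T = "\<lambda>J. pds h (map J [0..<m])"
  let ?Pr = "\<lambda>J y. \<Prod>r<m. V r y $ J r"
  let ?D = "\<lambda>k r J. pd k (\<lambda>y. V r y $ J r) x"
  let ?O = "\<lambda>r J. \<Prod>r'\<in>{..<m}-{r}. V r' x $ J r'"
  have lT: "lined (?T J)" for J
    using Ck_pds[OF h, of "map J [0..<m]"] by (intro Ck_lined'[of 1]) auto
  have lPr: "lined (?Pr J)" for J by (intro lined_prod V) simp
  have pdk: "pd k (\<lambda>y. dapp h (map (\<lambda>r. V r y) [0..<m]) y) x =
     (\<Sum>J\<in>?P. pds h (map J [0..<m] @ [k]) x * ?Pr J x + ?T J x * (\<Sum>r<m. ?D k r J * ?O r J))" for k
  proof -
    have "pd k (\<lambda>y. dapp h (map (\<lambda>r. V r y) [0..<m]) y) x = pd k (\<lambda>y. \<Sum>J\<in>?P. ?T J y * ?Pr J y) x"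
      unfolding dapp_map ..
    also have "\<dots> = (\<Sum>J\<in>?P. pd k (\<lambda>y. ?T J y * ?Pr J y) x)"
      by (intro pd_sum lined_mult lT lPr)
    also have "\<dots> = (\<Sum>J\<in>?P. pd k (?T J) x * ?Pr J x + ?T J x * pd k (?Pr J) x)"
      by (intro sum.cong refl pd_mult lT lPr)
    also have "\<dots> = (\<Sum>J\<in>?P. pds h (map J [0..<m] @ [k]) x * ?Pr J x + ?T J x * (\<Sum>r<m. ?D k r J * ?O r J))"
    proof (intro sum.cong refl arg_cong2[where f="(+)"] arg_cong2[where f="(*)"])
      fix J :: "nat \<Rightarrow> 'd"
      have "pd k (?T J) = pds h (k # map J [0..<m])" by simp
      also have "\<dots> = pds h (map J [0..<m] @ [k])" using pds_rot[of "map J [0..<m]" h k] h by simp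
      finally show "pd k (?T J) x = pds h (map J [0..<m] @ [k]) x" by simp
      show "pd k (?Pr J) x = (\<Sum>r<m. ?D k r J * ?O r J)" by (intro pd_prod V) simp
    qed
    finally show ?thesis .
  qed
  have "(\<Sum>k\<in>UNIV. v$k * pd k (\<lambda>y. dapp h (map (\<lambda>r. V r y) [0..<m]) y) x) =
     (\<Sum>k\<in>UNIV. v$k * (\<Sum>J\<in>?P. pds h (map J [0..<m] @ [k]) x * ?Pr J x)) +
     (\<Sum>k\<in>UNIV. \<Sum>J\<in>?P. \<Sum>r<m. v$k * (?T J x * (?D k r J * ?O r J)))"
    by (simp only: pdk sum.distrib distrib_left sum_distrib_left)
  also have "(\<Sum>k\<in>UNIV. v$k * (\<Sum>J\<in>?P. pds h (map J [0..<m] @ [k]) x * ?Pr J x)) =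
      dapp h (map (\<lambda>r. V r x) [0..<m] @ [v]) x"
    by (subst dapp_snoc, simp only: length_map length_upt diff_zero,
        intro sum.cong refl arg_cong2[where f="(*)"] prod.cong) auto
  also have "(\<Sum>k\<in>UNIV. \<Sum>J\<in>?P. \<Sum>r<m. v$k * (?T J x * (?D k r J * ?O r J))) =
      (\<Sum>r<m. \<Sum>J\<in>?P. ?T J x * ((\<Sum>k\<in>UNIV. v$k * ?D k r J) * ?O r J))"
  proof -
    have "(\<Sum>k\<in>UNIV. \<Sum>J\<in>?P. \<Sum>r<m. v$k * (?T J x * (?D k r J * ?O r J))) =
       (\<Sum>J\<in>?P. \<Sum>k\<in>UNIV. \<Sum>r<m. v$k * (?T J x * (?D k r J * ?O r J)))" by (rule sum.swap)
    also have "\<dots> = (\<Sum>J\<in>?P. \<Sum>r<m. \<Sum>k\<in>UNIV. v$k * (?T J x * (?D k r J * ?O r J)))"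
      by (intro sum.cong refl) (rule sum.swap)
    also have "\<dots> = (\<Sum>r<m. \<Sum>J\<in>?P. \<Sum>k\<in>UNIV. v$k * (?T J x * (?D k r J * ?O r J)))" by (rule sum.swap)
    also have "\<dots> = (\<Sum>r<m. \<Sum>J\<in>?P. ?T J x * ((\<Sum>k\<in>UNIV. v$k * ?D k r J) * ?O r J))"
      by (intro sum.cong refl) (simp add: sum_distrib_left sum_distrib_right mult.assoc mult.left_commute)
    finally show ?thesis .
  qed
  also have "\<dots> = (\<Sum>r<m. dapp h ((map (\<lambda>r. V r x) [0..<m])[r := (\<chi> J. \<Sum>k\<in>UNIV. v$k * pd k (\<lambda>y. V r y $ J) x)]) x)"
    by (intro sum.cong refl) (simp add: dapp_upd_eq)
  finally show ?thesis .
qed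




function myN :: "tree \<Rightarrow> (nat \<Rightarrow> real^'d::finite \<Rightarrow> real^'d) \<Rightarrow> nat \<Rightarrow> real^'d \<Rightarrow> real^'d" where
  "myN t g i x = (\<chi> I. dapp (\<lambda>y. g i y $ I) (map (\<lambda>c. myN t g c x) (children t i)) x)"
  by pat_completeness auto
termination
  by (relation "Wellfounded.measure (\<lambda>(t, g, i, x). Suc (length t) - i)") (auto simp: children_def)
declare myN.simps[simp del]

definition Q :: "tree \<Rightarrow> (nat \<Rightarrow> real^'d::finite \<Rightarrow> real^'d) \<Rightarrow> (real^'d \<Rightarrow> real) \<Rightarrow> nat \<Rightarrow> real^'d \<Rightarrow> real" where
  "Q t g h i x = dapp h (map (\<lambda>c. myN t g c x) (children t i)) x"

lemma myN_Q: "myN t g i x $ I = Q t g (\<lambda>y. g i y $ I) i x"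
  by (subst myN.simps) (simp add: Q_def)

definition wft :: "tree \<Rightarrow> bool" where
  "wft t \<longleftrightarrow> 1 \<le> length t \<and> (\<forall>i. 2 \<le> i \<and> i \<le> length t \<longrightarrow> 1 \<le> par t i \<and> par t i < i)"

lemma children_set: "c \<in> set (children t i) \<longleftrightarrow> i < c \<and> c \<le> length t \<and> par t c = i"
  by (auto simp: children_def)

lemma distinct_children: "distinct (children t i)"
  by (simp add: children_def)

lemma children_snoc: assumes "i \<le> length t"
  shows "children (t @ [(p, c0)]) i = children t i @ (if p = i then [Suc (length t)] else [])"
proof -
  have u: "[Suc i..<Suc (length (t @ [(p, c0)]))] = [Suc i..<Suc (length t)] @ [Suc (length t)]"
    using assms by simp
  have "par (t @ [(p, c0)]) c = par t c" if "c \<in> set [Suc i..<Suc (length t)]" for c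
    using that by (auto simp: par_def nth_append)
  then have "filter (\<lambda>c. par (t @ [(p, c0)]) c = i) [Suc i..<Suc (length t)] = children t i"
    unfolding children_def by (intro filter_cong) auto
  moreover have "par (t @ [(p, c0)]) (Suc (length t)) = p" by (simp add: par_def)
  ultimately show ?thesis unfolding children_def u by auto
qed

lemma children_beyond: "length t \<le> i \<Longrightarrow> children t i = []"
  by (auto simp: children_def filter_empty_conv)

lemma dapp_nil: "dapp h [] x = h x"
proof -
  have "{..<length ([]::(real^'a) list)} \<rightarrow>\<^sub>E (UNIV::'a set) = {\<lambda>_. undefined}" by simp
  then show ?thesis unfolding dapp_def by simp
qed

lemma myN_leaf: "children t i = [] \<Longrightarrow> myN t g i x = g i x"
  by (subst myN.simps) (simp add: dapp_nil vec_eq_iff)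

lemma map_as_nth: "map f xs = map (\<lambda>r. f (xs ! r)) [0..<length xs]"
  by (rule nth_equalityI) auto

lemma wft_snoc: "wft t \<Longrightarrow> 1 \<le> p \<Longrightarrow> p \<le> length t \<Longrightarrow> wft (t @ [(p, c0)])"
  unfolding wft_def by (auto simp: par_def nth_append)

function desc :: "tree \<Rightarrow> nat \<Rightarrow> nat \<Rightarrow> bool" where
  "desc t i p = (if p = i then True else if i < p \<and> par t p < p then desc t i (par t p) else False)"
  by pat_completeness auto
termination by (relation "Wellfounded.measure (\<lambda>(t, i, p). p)") auto
declare desc.simps[simp del]

lemma desc_refl: "desc t i i" by (subst desc.simps) simp

lemma desc_intro: "i < p \<Longrightarrow> par t p < p \<Longrightarrow> desc t i (par t p) \<Longrightarrow> desc t i p"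
  by (subst desc.simps) simp

lemma desc_step: "desc t i p \<Longrightarrow> p \<noteq> i \<Longrightarrow> i < p \<and> par t p < p \<and> desc t i (par t p)"
  by (subst (asm) desc.simps) (auto split: if_splits)

lemma desc_le: "desc t i p \<Longrightarrow> i \<le> p"
proof (induction t i p rule: desc.induct)
  case (1 t i p)
  then show ?case by (cases "p = i") (use desc_step in fastforce)+
qed

lemma desc_par: "par t p < p \<Longrightarrow> desc t (par t p) p"
  by (rule desc_intro) (auto intro: desc_refl)

lemma desc_trans: "desc t c p \<Longrightarrow> desc t i c \<Longrightarrow> desc t i p"
proof (induction p rule: less_induct)
  case (less p)
  show ?case
  proof (cases "p = c")
    case True then show ?thesis using less.prems by simp
  next
    case False
    from desc_step[OF less.prems(1) False] have h: "c < p" "par t p < p" "desc t c (par t p)" by auto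
    have "desc t i (par t p)" using less.IH[OF h(2) h(3) less.prems(2)] .
    moreover have "i < p" using desc_le[OF less.prems(2)] h(1) by simp
    ultimately show ?thesis using h(2) desc_intro by blast
  qed
qed

lemma desc_child: "c \<in> set (children t i) \<Longrightarrow> desc t i c"
  using desc_par[of t c] by (auto simp: children_set)

lemma desc_root: "wft t \<Longrightarrow> 1 \<le> p \<Longrightarrow> p \<le> length t \<Longrightarrow> desc t 1 p"
proof (induction p rule: less_induct)
  case (less p)
  show ?case
  proof (cases "p = 1")
    case True then show ?thesis by (simp add: desc_refl)
  next
    case False
    then have "1 \<le> par t p" "par t p < p" using less.prems unfolding wft_def by auto
    then have "desc t 1 (par t p)" using less.IH[of "par t p"] less.prems by simp
    then show ?thesis using desc_trans[OF desc_par[OF \<open>par t p < p\<close>]] by simp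
  qed
qed

lemma desc_cover: "wft t \<Longrightarrow> desc t i p \<Longrightarrow> p \<noteq> i \<Longrightarrow> p \<le> length t \<Longrightarrow> \<exists>c\<in>set (children t i). desc t c p"
proof (induction p rule: less_induct)
  case (less p)
  from less.prems(2,3) have h: "i < p" "par t p < p" "desc t i (par t p)"
    using desc_step by blast+
  show ?case
  proof (cases "par t p = i")
    case True
    then have "p \<in> set (children t i)" using h less.prems by (auto simp: children_set)
    then show ?thesis using desc_refl by blast
  next
    case False
    then obtain c where "c \<in> set (children t i)" "desc t c (par t p)"
      using less.IH[of "par t p"] h less.prems by auto
    then show ?thesis using desc_trans desc_par h(2) by blast
  qed
qed

lemma desc_chain: "desc t c p \<Longrightarrow> desc t c' p \<Longrightarrow> c \<le> c' \<Longrightarrow> desc t c c'"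
proof (induction p rule: less_induct)
  case (less p)
  show ?case
  proof (cases "p = c'")
    case True then show ?thesis using less by simp
  next
    case False
    then have h: "c' < p" "par t p < p" "desc t c' (par t p)" using less.prems(2)
      desc_step by blast+
    have "p \<noteq> c" using h less.prems by auto
    then have "desc t c (par t p)" using less.prems(1) desc_step by blast
    then show ?thesis using less.IH h less.prems by blast
  qed
qed

lemma desc_unique: "c \<in> set (children t i) \<Longrightarrow> c' \<in> set (children t i) \<Longrightarrow> desc t c p \<Longrightarrow> desc t c' p \<Longrightarrow> c = c'"
proof -
  have *: "c = c'" if "c \<in> set (children t i)" "c' \<in> set (children t i)" "desc t c p" "desc t c' p" "c \<le> c'" for c c'
  proof (rule ccontr)
    assume ne: "c \<noteq> c'"
    have "desc t c c'" using desc_chain that by blast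
    then have "desc t c (par t c')" using ne desc_step by blast
    then have "c \<le> i" using that(2) desc_le by (auto simp: children_set)
    then show False using that(1) by (auto simp: children_set)
  qed
  show "c \<in> set (children t i) \<Longrightarrow> c' \<in> set (children t i) \<Longrightarrow> desc t c p \<Longrightarrow> desc t c' p \<Longrightarrow> c = c'"
    using *[of c c'] *[of c' c] by linarith
qed




lemma myN_eq_aux:
  "(\<forall>j\<in>S. children t1 j = children t2 j \<and> g1 j = g2 j \<and> set (children t1 j) \<subseteq> S \<union> Z) \<longrightarrow>
   (\<forall>z\<in>Z. myN t1 g1 z x = myN t2 g2 z x) \<longrightarrow> i \<in> S \<longrightarrow> myN t1 g1 i x = myN t2 g2 i x"
proof (induction t1 g1 i x rule: myN.induct)
  case (1 t g i x)
  show ?case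
  proof (intro impI)
    assume A: "\<forall>j\<in>S. children t j = children t2 j \<and> g j = g2 j \<and> set (children t j) \<subseteq> S \<union> Z"
      and B: "\<forall>z\<in>Z. myN t g z x = myN t2 g2 z x" and i: "i \<in> S"
    have cm: "myN t g c x = myN t2 g2 c x" if c: "c \<in> set (children t i)" for c
    proof (cases "c \<in> S")
      case True then show ?thesis using "1.IH"[OF c] A B by blast
    next
      case False then show ?thesis using A B i c by blast
    qed
    have ch: "children t2 i = children t i" and gi: "g2 i = g i" using A i by auto
    have "map (\<lambda>c. myN t g c x) (children t i) = map (\<lambda>c. myN t2 g2 c x) (children t2 i)"
      unfolding ch using cm by simp
    then show "myN t g i x = myN t2 g2 i x"
      unfolding myN.simps[of t g i x] myN.simps[of t2 g2 i x] gi by simp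
  qed
qed

lemma length_children: "length (children t i) \<le> length t - i"
  unfolding children_def by (metis diff_Suc_Suc length_filter_le length_upt)

lemma Q_expand: "Q t g h i y = dapp h (map (\<lambda>r. myN t g (children t i ! r) y) [0..<length (children t i)]) y"
  unfolding Q_def by (subst map_as_nth) simp

lemma children_nth: "r < length (children t i) \<Longrightarrow> i < children t i ! r \<and> children t i ! r \<le> length t \<and> par t (children t i ! r) = i"
  using children_set nth_mem by blast

lemma Ck_myN:
  assumes "length t \<le> M" "\<forall>j I. Ck M (\<lambda>y. g j y $ I)"
  shows "Ck (M - (length t - i)) (\<lambda>y. myN t g i y $ I)"
proof (induction "length t - i" arbitrary: i I rule: less_induct)
  case less
  let ?cs = "children t i"
  let ?q = "M - (length t - i)"
  have e: "(\<lambda>y. myN t g i y $ I) = (\<lambda>y. dapp (\<lambda>y. g i y $ I) (map (\<lambda>r. myN t g (?cs ! r) y) [0..<length ?cs]) y)"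
    by (rule ext) (simp only: myN_Q Q_expand)
  have "Ck ?q (\<lambda>y. dapp (\<lambda>y. g i y $ I) (map (\<lambda>r. myN t g (?cs ! r) y) [0..<length ?cs]) y)"
  proof (rule Ck_dapp)
    show "Ck (?q + length ?cs) (\<lambda>y. g i y $ I)"
      by (rule Ck_le[of _ M]) (use assms length_children[of t i] in auto)
    fix r J assume r: "r < length ?cs"
    have c: "i < ?cs ! r" "?cs ! r \<le> length t" using children_nth[OF r] by auto
    then have "length t - ?cs ! r < length t - i" by auto
    then have X: "Ck (M - (length t - ?cs ! r)) (\<lambda>y. myN t g (?cs ! r) y $ J)" by (rule less)
    show "Ck ?q (\<lambda>y. myN t g (?cs ! r) y $ J)" by (rule Ck_le[OF _ X]) (use c in auto)
  qed
  then show ?case using e by simp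
qed

lemma Ck_Q:
  assumes "length t \<le> M" "\<forall>j I. Ck M (\<lambda>y. g j y $ I)" "Ck M h"
  shows "Ck (M - (length t - i)) (Q t g h i)"
proof -
  let ?cs = "children t i"
  let ?q = "M - (length t - i)"
  have "Ck ?q (\<lambda>y. dapp h (map (\<lambda>r. myN t g (?cs ! r) y) [0..<length ?cs]) y)"
  proof (rule Ck_dapp)
    show "Ck (?q + length ?cs) h"
      by (rule Ck_le[of _ M]) (use assms length_children[of t i] in auto)
    fix r J assume r: "r < length ?cs"
    have c: "i < ?cs ! r" "?cs ! r \<le> length t" using children_nth[OF r] by auto
    have X: "Ck (M - (length t - ?cs ! r)) (\<lambda>y. myN t g (?cs ! r) y $ J)" using Ck_myN assms by blast
    show "Ck ?q (\<lambda>y. myN t g (?cs ! r) y $ J)" by (rule Ck_le[OF _ X]) (use c in auto)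
  qed
  moreover have "Q t g h i = (\<lambda>y. dapp h (map (\<lambda>r. myN t g (?cs ! r) y) [0..<length ?cs]) y)"
    by (rule ext) (rule Q_expand)
  ultimately show ?thesis by simp
qed

lemma myN_snoc:
  assumes "j \<le> length t" "\<not> desc t j p" "\<And>i. i \<le> length t \<Longrightarrow> g' i = g i"
  shows "myN (t @ [(p, c0)]) g' j x = myN t g j x"
proof -
  let ?S = "{j. j \<le> length t \<and> \<not> desc t j p}"
  have H: "\<forall>j\<in>?S. children (t @ [(p, c0)]) j = children t j \<and> g' j = g j \<and> set (children (t @ [(p, c0)]) j) \<subseteq> ?S \<union> {}"
  proof
    fix j assume j: "j \<in> ?S"
    then have pj: "p \<noteq> j" using desc_refl by auto
    have ch: "children (t @ [(p, c0)]) j = children t j" using children_snoc[of j t p c0] j pj by simp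
    have "set (children t j) \<subseteq> ?S"
    proof
      fix c assume c: "c \<in> set (children t j)"
      have "\<not> desc t c p" using j desc_trans[OF _ desc_child[OF c]] by blast
      then show "c \<in> ?S" using c by (auto simp: children_set)
    qed
    then show "children (t @ [(p, c0)]) j = children t j \<and> g' j = g j \<and> set (children (t @ [(p, c0)]) j) \<subseteq> ?S \<union> {}"
      using ch assms(3) j by auto
  qed
  have Z: "\<forall>z\<in>{}. myN (t @ [(p, c0)]) g' z x = myN t g z x" by simp
  have J: "j \<in> ?S" using assms by simp
  show ?thesis by (rule mp[OF mp[OF mp[OF myN_eq_aux H] Z] J])
qed




lemma DQ:
  fixes t :: tree and g :: "nat \<Rightarrow> real^'d::finite \<Rightarrow> real^'d" and v :: "real^'d \<Rightarrow> real^'d"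
  assumes wf: "wft t" and LM: "length t \<le> M" and sm: "\<forall>j I. Ck M (\<lambda>y. g j y $ I)"
  shows "1 \<le> i \<Longrightarrow> i \<le> length t \<Longrightarrow> Ck M h \<Longrightarrow>
    (\<Sum>k\<in>UNIV. v x $ k * pd k (Q t g h i) x) =
    (\<Sum>p\<in>{p\<in>{1..length t}. desc t i p}. Q (t @ [(p, c0)]) (g(Suc (length t) := v)) h i x)"
proof (induction "length t - i" arbitrary: i h rule: less_induct)
  case less
  note i1 = less.prems(1) and iL = less.prems(2) and hM = less.prems(3)
  define L where "L = length t"
  define cs where "cs = children t i"
  define m where "m = length cs"
  define V where "V r y = myN t g (cs ! r) y" for r y
  define g' where "g' = g(Suc L := v)"
  define D where "D j = {p\<in>{1..L}. desc t j p}" for j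
  define vsx where "vsx = map (\<lambda>r. V r x) [0..<m]"
  define F where "F p = Q (t @ [(p, c0)]) g' h i x" for p
  have cs_r: "i < cs ! r \<and> cs ! r \<le> L" if "r < m" for r
    using children_nth[of r t i] that by (auto simp: cs_def m_def L_def)
  have Qe: "Q t g h i = (\<lambda>y. dapp h (map (\<lambda>r. V r y) [0..<m]) y)"
    by (rule ext) (simp add: Q_expand V_def cs_def m_def)
  have hm: "Ck (Suc m) h"
    by (rule Ck_le[OF _ hM]) (use length_children[of t i] i1 iL LM in \<open>auto simp: m_def cs_def\<close>)
  have lV: "lined (\<lambda>y. V r y $ J)" if r: "r < m" for r J
  proof -
    have X: "Ck (M - (length t - cs ! r)) (\<lambda>y. V r y $ J)" unfolding V_def by (rule Ck_myN[OF LM sm])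
    show ?thesis by (rule Ck_lined'[OF X]) (use cs_r[OF r] i1 LM in \<open>auto simp: L_def\<close>)
  qed
  have step1: "(\<Sum>k\<in>UNIV. v x $ k * pd k (Q t g h i) x) = dapp h (vsx @ [v x]) x +
      (\<Sum>r<m. dapp h (vsx[r := (\<chi> J. \<Sum>k\<in>UNIV. v x $ k * pd k (\<lambda>y. V r y $ J) x)]) x)"
    unfolding Qe vsx_def by (rule dapp_deriv[OF hm lV])
  have DV: "(\<chi> J. \<Sum>k\<in>UNIV. v x $ k * pd k (\<lambda>y. V r y $ J) x) = (\<Sum>p\<in>D (cs ! r). myN (t @ [(p, c0)]) g' (cs ! r) x)"
    if r: "r < m" for r
  proof -
    let ?c = "cs ! r"
    have "(\<Sum>k\<in>UNIV. v x $ k * pd k (\<lambda>y. V r y $ J) x) = (\<Sum>p\<in>D ?c. myN (t @ [(p, c0)]) g' ?c x $ J)" for J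
    proof -
      have e1: "(\<lambda>y. V r y $ J) = Q t g (\<lambda>y. g ?c y $ J) ?c" by (rule ext) (simp add: V_def myN_Q)
      have lt: "length t - ?c < length t - i" using cs_r[OF r] by (auto simp: L_def)
      have e2: "(\<Sum>k\<in>UNIV. v x $ k * pd k (Q t g (\<lambda>y. g ?c y $ J) ?c) x) =
          (\<Sum>p\<in>D ?c. Q (t @ [(p, c0)]) g' (\<lambda>y. g ?c y $ J) ?c x)"
        using less.hyps[OF lt, of "\<lambda>y. g ?c y $ J"] cs_r[OF r] i1 sm by (auto simp: D_def g'_def L_def)
      have e3: "Q (t @ [(p, c0)]) g' (\<lambda>y. g ?c y $ J) ?c x = myN (t @ [(p, c0)]) g' ?c x $ J" for p
        using cs_r[OF r] by (simp add: myN_Q g'_def L_def)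
      show ?thesis using e1 e2 e3 by simp
    qed
    then show ?thesis by (simp add: vec_eq_iff sum_component)
  qed
  have step2: "(\<Sum>r<m. dapp h (vsx[r := (\<chi> J. \<Sum>k\<in>UNIV. v x $ k * pd k (\<lambda>y. V r y $ J) x)]) x) =
      (\<Sum>r<m. \<Sum>p\<in>D (cs ! r). dapp h (vsx[r := myN (t @ [(p, c0)]) g' (cs ! r) x]) x)"
  proof (rule sum.cong[OF refl])
    fix r assume "r \<in> {..<m}"
    then have r: "r < length vsx" by (simp add: vsx_def)
    show "dapp h (vsx[r := (\<chi> J. \<Sum>k\<in>UNIV. v x $ k * pd k (\<lambda>y. V r y $ J) x)]) x =
      (\<Sum>p\<in>D (cs ! r). dapp h (vsx[r := myN (t @ [(p, c0)]) g' (cs ! r) x]) x)"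
      using DV[of r] r dapp_upd_sum[OF r] by (simp add: vsx_def)
  qed
  have Dsub: "D j \<subseteq> {1..L}" for j by (auto simp: D_def)
  have Dset: "D i = insert i (\<Union>r\<in>{..<m}. D (cs ! r))"
  proof
    show "D i \<subseteq> insert i (\<Union>r\<in>{..<m}. D (cs ! r))"
    proof
      fix p assume p: "p \<in> D i"
      show "p \<in> insert i (\<Union>r\<in>{..<m}. D (cs ! r))"
      proof (cases "p = i")
        case False
        then obtain c where c: "c \<in> set cs" "desc t c p"
          using desc_cover[OF wf, of i p] p by (auto simp: D_def cs_def L_def)
        then obtain r where "r < m" "c = cs ! r" by (auto simp: in_set_conv_nth m_def)
        then show ?thesis using c p by (auto simp: D_def)
      qed simp
    qed
    show "insert i (\<Union>r\<in>{..<m}. D (cs ! r)) \<subseteq> D i"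
    proof
      fix p assume "p \<in> insert i (\<Union>r\<in>{..<m}. D (cs ! r))"
      then consider "p = i" | r where "r < m" "p \<in> D (cs ! r)" by auto
      then show "p \<in> D i"
      proof cases
        case 1 then show ?thesis using i1 iL by (auto simp: D_def L_def desc_refl)
      next
        case 2
        have "cs ! r \<in> set (children t i)" using 2 by (auto simp: cs_def m_def)
        then show ?thesis using 2 desc_trans desc_child by (auto simp: D_def)
      qed
    qed
  qed
  have inot: "i \<notin> (\<Union>r\<in>{..<m}. D (cs ! r))"
    using cs_r desc_le by (fastforce simp: D_def)
  have disj: "D (cs ! r) \<inter> D (cs ! r') = {}" if "r \<in> {..<m}" "r' \<in> {..<m}" "r \<noteq> r'" for r r'
  proof -
    have ne: "cs ! r \<noteq> cs ! r'" using that distinct_children[of t i] by (auto simp: cs_def m_def nth_eq_iff_index_eq)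
    have "cs ! r \<in> set (children t i)" "cs ! r' \<in> set (children t i)" using that by (auto simp: cs_def m_def)
    then show ?thesis using desc_unique ne by (auto simp: D_def)
  qed
  have rhs: "(\<Sum>p\<in>D i. F p) = F i + (\<Sum>r<m. \<Sum>p\<in>D (cs ! r). F p)"
  proof -
    have fin: "finite (D j)" for j using Dsub finite_subset by blast
    have "(\<Sum>p\<in>D i. F p) = F i + (\<Sum>p\<in>(\<Union>r\<in>{..<m}. D (cs ! r)). F p)"
      unfolding Dset by (rule sum.insert) (use fin inot in auto)
    also have "(\<Sum>p\<in>(\<Union>r\<in>{..<m}. D (cs ! r)). F p) = (\<Sum>r<m. \<Sum>p\<in>D (cs ! r). F p)"
      by (rule sum.UNION_disjoint) (use fin disj in auto)
    finally show ?thesis .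
  qed
  have Fi: "F i = dapp h (vsx @ [v x]) x"
  proof -
    have ch: "children (t @ [(i, c0)]) i = cs @ [Suc L]" using children_snoc[OF iL, of i c0] by (simp add: cs_def L_def)
    have "myN (t @ [(i, c0)]) g' c x = myN t g c x" if c: "c \<in> set cs" for c
    proof (rule myN_snoc)
      show "c \<le> length t" using c by (auto simp: cs_def children_set)
      show "\<not> desc t c i" using c desc_le by (fastforce simp: cs_def children_set)
      show "g' j = g j" if "j \<le> length t" for j using that by (simp add: g'_def L_def)
    qed
    then have m1: "map (\<lambda>c. myN (t @ [(i, c0)]) g' c x) cs = vsx"
      by (subst map_as_nth) (auto simp: vsx_def V_def m_def)
    have "myN (t @ [(i, c0)]) g' (Suc L) x = v x"
      by (subst myN_leaf) (auto simp: children_beyond g'_def L_def)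
    then show ?thesis unfolding F_def Q_def ch using m1 by simp
  qed
  have Fp: "F p = dapp h (vsx[r := myN (t @ [(p, c0)]) g' (cs ! r) x]) x" if r: "r < m" and p: "p \<in> D (cs ! r)" for r p
  proof -
    have pi: "p \<noteq> i" using p cs_r[OF r] desc_le by (fastforce simp: D_def)
    have ch: "children (t @ [(p, c0)]) i = cs" using children_snoc[OF iL, of p c0] pi by (simp add: cs_def)
    have "map (\<lambda>c. myN (t @ [(p, c0)]) g' c x) cs = vsx[r := myN (t @ [(p, c0)]) g' (cs ! r) x]"
    proof (rule nth_equalityI)
      show "length (map (\<lambda>c. myN (t @ [(p, c0)]) g' c x) cs) = length (vsx[r := myN (t @ [(p, c0)]) g' (cs ! r) x])"
        by (simp add: vsx_def m_def)
      fix r' assume r': "r' < length (map (\<lambda>c. myN (t @ [(p, c0)]) g' c x) cs)"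
      then have r'm: "r' < m" by (simp add: m_def)
      show "map (\<lambda>c. myN (t @ [(p, c0)]) g' c x) cs ! r' = vsx[r := myN (t @ [(p, c0)]) g' (cs ! r) x] ! r'"
      proof (cases "r' = r")
        case True then show ?thesis using r by (simp add: vsx_def m_def)
      next
        case False
        have ne: "cs ! r \<noteq> cs ! r'" using False r r'm distinct_children[of t i] by (auto simp: cs_def m_def nth_eq_iff_index_eq)
        have mem: "cs ! r \<in> set (children t i)" "cs ! r' \<in> set (children t i)" using r r'm by (auto simp: cs_def m_def)
        have nd: "\<not> desc t (cs ! r') p" using desc_unique[OF mem] ne p by (auto simp: D_def)
        have "myN (t @ [(p, c0)]) g' (cs ! r') x = myN t g (cs ! r') x"
        proof (rule myN_snoc[OF _ nd])
          show "cs ! r' \<le> length t" using cs_r[OF r'm] by (simp add: L_def)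
          show "g' j = g j" if "j \<le> length t" for j using that by (simp add: g'_def L_def)
        qed
        then show ?thesis using False r'm by (simp add: vsx_def V_def m_def)
      qed
    qed
    then show ?thesis unfolding F_def Q_def ch by simp
  qed
  have "(\<Sum>k\<in>UNIV. v x $ k * pd k (Q t g h i) x) = F i + (\<Sum>r<m. \<Sum>p\<in>D (cs ! r). F p)"
    unfolding step1 step2 Fi using Fp by simp
  also have "\<dots> = (\<Sum>p\<in>D i. F p)" by (rule rhs[symmetric])
  finally show ?case by (simp add: D_def F_def g'_def L_def)
qed




lemma DQ1:
  fixes t :: tree and g :: "nat \<Rightarrow> real^'d::finite \<Rightarrow> real^'d" and v :: "real^'d \<Rightarrow> real^'d"
  assumes wf: "wft t" and LM: "length t \<le> M" and sm: "\<forall>j I. Ck M (\<lambda>y. g j y $ I)" and hM: "Ck M h"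
  shows "(\<Sum>k\<in>UNIV. v x $ k * pd k (Q t g h 1) x) =
    (\<Sum>p=1..length t. Q (t @ [(p, c0)]) (g(Suc (length t) := v)) h 1 x)"
proof -
  have "{p\<in>{1..length t}. desc t 1 p} = {1..length t}" using desc_root[OF wf] by auto
  moreover have "1 \<le> length t" using wf by (simp add: wft_def)
  ultimately show ?thesis using DQ[OF wf LM sm, of 1 h v x c0] hM by simp
qed

lemma dapp_single: "dapp h [w] x = (\<Sum>k\<in>UNIV. w $ k * pd k h x)"
proof -
  have "{..<length ([]::(real^'a) list)} \<rightarrow>\<^sub>E (UNIV::'a set) = {\<lambda>_. undefined}" by simp
  then show ?thesis using dapp_snoc[of h "[]" w x] by simp
qed

lemma collapse:
  fixes t :: tree and g :: "nat \<Rightarrow> real^'d::finite \<Rightarrow> real^'d"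
  assumes wf: "wft t"
  defines "L \<equiv> length t"
  shows "Q (t @ [(q, c1), (Suc L, c2)]) (g(Suc L := w, Suc (Suc L) := u)) h 1 x =
         Q (t @ [(q, c1)]) (g(Suc L := (\<lambda>y. \<chi> I. \<Sum>k\<in>UNIV. u y $ k * pd k (\<lambda>z. w z $ I) y))) h 1 x"
proof -
  let ?t1 = "t @ [(q, c1)]" and ?t2 = "t @ [(q, c1), (Suc L, c2)]"
  let ?g1 = "g(Suc L := (\<lambda>y. \<chi> I. \<Sum>k\<in>UNIV. u y $ k * pd k (\<lambda>z. w z $ I) y))"
  let ?g2 = "g(Suc L := w, Suc (Suc L) := u)"
  have t2: "?t2 = ?t1 @ [(Suc L, c2)]" by simp
  have l1: "length ?t1 = Suc L" by (simp add: L_def)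
  let ?S = "{j. j \<le> L}" and ?Z = "{Suc L}"
  have H: "\<forall>j\<in>?S. children ?t2 j = children ?t1 j \<and> ?g2 j = ?g1 j \<and> set (children ?t2 j) \<subseteq> ?S \<union> ?Z"
  proof
    fix j assume j: "j \<in> ?S"
    have ch: "children ?t2 j = children ?t1 j" unfolding t2 using children_snoc[of j ?t1 "Suc L" c2] j l1 by simp
    have "set (children ?t1 j) \<subseteq> ?S \<union> ?Z" using l1 by (auto simp: children_set)
    then show "children ?t2 j = children ?t1 j \<and> ?g2 j = ?g1 j \<and> set (children ?t2 j) \<subseteq> ?S \<union> ?Z"
      using ch j by simp
  qed
  have Z: "\<forall>z\<in>?Z. myN ?t2 ?g2 z x = myN ?t1 ?g1 z x"
  proof
    fix z assume "z \<in> ?Z"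
    then have z: "z = Suc L" by simp
    have c2: "children ?t2 (Suc L) = [Suc (Suc L)]"
      unfolding t2 using children_snoc[of "Suc L" ?t1 "Suc L" c2] l1 children_beyond[of ?t1 "Suc L"] by simp
    have leaf: "myN ?t2 ?g2 (Suc (Suc L)) x = u x"
      by (subst myN_leaf) (auto simp: children_beyond L_def)
    have "myN ?t2 ?g2 (Suc L) x = (\<chi> I. \<Sum>k\<in>UNIV. u x $ k * pd k (\<lambda>z. w z $ I) x)"
      by (subst myN.simps) (simp add: c2 leaf dapp_single)
    moreover have "myN ?t1 ?g1 (Suc L) x = (\<chi> I. \<Sum>k\<in>UNIV. u x $ k * pd k (\<lambda>z. w z $ I) x)"
      by (subst myN_leaf) (auto simp: children_beyond L_def)
    ultimately show "myN ?t2 ?g2 z x = myN ?t1 ?g1 z x" using z by simp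
  qed
  have L1: "1 \<le> L" using wf by (simp add: wft_def L_def)
  have eqc: "myN ?t2 ?g2 c x = myN ?t1 ?g1 c x" if c: "c \<in> set (children ?t1 1)" for c
  proof (cases "c = Suc L")
    case True then show ?thesis using Z by simp
  next
    case False
    then have "c \<in> ?S" using c l1 by (auto simp: children_set)
    then show ?thesis by (rule mp[OF mp[OF mp[OF myN_eq_aux H] Z]])
  qed
  have ch1: "children ?t2 1 = children ?t1 1" using H L1 by simp
  have ME: "map (\<lambda>c. myN ?t2 ?g2 c x) (children ?t1 1) = map (\<lambda>c. myN ?t1 ?g1 c x) (children ?t1 1)"
    by (rule map_cong[OF refl eqc])
  show ?thesis unfolding Q_def ch1 by (simp only: ME)
qed




lemma D2:
  fixes t :: tree and g :: "nat \<Rightarrow> real^'d::finite \<Rightarrow> real^'d" and w u :: "real^'d \<Rightarrow> real^'d"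
  assumes wf: "wft t" and LM: "Suc (length t) \<le> M" and sm: "\<forall>j I. Ck M (\<lambda>y. g j y $ I)" and hM: "Ck M h"
    and wM: "\<forall>I. Ck M (\<lambda>y. w y $ I)"
  shows "(\<Sum>k\<in>UNIV. \<Sum>l\<in>UNIV. u x $ k * w x $ l * pd k (pd l (Q t g h 1)) x) =
    (\<Sum>q=1..length t. \<Sum>p=1..length t. Q (t @ [(q, c1), (p, c2)]) (g(Suc (length t) := w, Suc (Suc (length t)) := u)) h 1 x)"
proof -
  define L where "L = length t"
  define E where "E = Q t g h 1"
  define gq where "gq = g(Suc L := w)"
  define Dw where "Dw y = (\<chi> I. \<Sum>k\<in>UNIV. u y $ k * pd k (\<lambda>z. w z $ I) y)" for y
  have L1: "1 \<le> L" using wf by (simp add: wft_def L_def)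
  have LM': "length t \<le> M" using LM by simp
  have CE0: "Ck (M - (length t - 1)) E" unfolding E_def by (rule Ck_Q[OF LM' sm hM])
  have CE: "Ck (Suc (Suc 0)) E" by (rule Ck_le[OF _ CE0]) (use LM L1 in \<open>auto simp: L_def\<close>)
  have lpd: "lined (pd l E)" for l using CE by (intro Ck_lined'[of "Suc 0"]) auto
  have lw: "lined (\<lambda>y. w y $ l)" for l using wM LM by (intro Ck_lined'[of M]) auto
  have smq: "\<forall>j I. Ck M (\<lambda>y. gq j y $ I)" using sm wM by (simp add: gq_def)
  have wfq: "wft (t @ [(q, c1)])" if "q \<in> {1..L}" for q using wft_snoc[OF wf] that by (auto simp: L_def)
  have lq: "length (t @ [(q, c1)]) = Suc L" for q by (simp add: L_def)
  have lQ: "lined (Q (t @ [(q, c1)]) gq h 1)" for q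
  proof -
    have X: "Ck (M - (length (t @ [(q, c1)]) - 1)) (Q (t @ [(q, c1)]) gq h 1)"
      by (rule Ck_Q[OF _ smq hM]) (use LM in \<open>simp add: L_def\<close>)
    show ?thesis by (rule Ck_lined'[OF X]) (use LM in \<open>simp add: L_def\<close>)
  qed
  have F1: "(\<lambda>y. \<Sum>l\<in>UNIV. w y $ l * pd l E y) = (\<lambda>y. \<Sum>q=1..L. Q (t @ [(q, c1)]) gq h 1 y)"
  proof (rule ext)
    fix y
    have "(\<Sum>k\<in>UNIV. w y $ k * pd k (Q t g h 1) y) = (\<Sum>p=1..length t. Q (t @ [(p, c1)]) (g(Suc (length t) := w)) h 1 y)"
      by (rule DQ1[OF wf LM' sm hM])
    then show "(\<Sum>l\<in>UNIV. w y $ l * pd l E y) = (\<Sum>q=1..L. Q (t @ [(q, c1)]) gq h 1 y)"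
      by (simp add: E_def gq_def L_def)
  qed
  have i1: "(\<Sum>k\<in>UNIV. u x $ k * pd k (\<lambda>y. \<Sum>l\<in>UNIV. w y $ l * pd l E y) x) =
      (\<Sum>q=1..L. \<Sum>k\<in>UNIV. u x $ k * pd k (Q (t @ [(q, c1)]) gq h 1) x)"
  proof -
    have "pd k (\<lambda>y. \<Sum>q=1..L. Q (t @ [(q, c1)]) gq h 1 y) x = (\<Sum>q=1..L. pd k (Q (t @ [(q, c1)]) gq h 1) x)" for k
      by (rule pd_sum) (rule lQ)
    then show ?thesis unfolding F1 by (simp add: sum_distrib_left sum.swap[of _ UNIV])
  qed
  have i2: "(\<Sum>k\<in>UNIV. u x $ k * pd k (Q (t @ [(q, c1)]) gq h 1) x) =
      (\<Sum>p=1..L. Q (t @ [(q, c1), (p, c2)]) (g(Suc L := w, Suc (Suc L) := u)) h 1 x) +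
      Q (t @ [(q, c1)]) (g(Suc L := Dw)) h 1 x" if q: "q \<in> {1..L}" for q
  proof -
    have "(\<Sum>k\<in>UNIV. u x $ k * pd k (Q (t @ [(q, c1)]) gq h 1) x) =
      (\<Sum>p=1..Suc L. Q (t @ [(q, c1)] @ [(p, c2)]) (gq(Suc (Suc L) := u)) h 1 x)"
      using DQ1[OF wfq[OF q] _ smq hM, where v=u and x=x] LM by (simp add: lq L_def)
    also have "\<dots> = (\<Sum>p=1..L. Q (t @ [(q, c1), (p, c2)]) (g(Suc L := w, Suc (Suc L) := u)) h 1 x) +
       Q (t @ [(q, c1), (Suc L, c2)]) (g(Suc L := w, Suc (Suc L) := u)) h 1 x"
      by (simp add: gq_def)
    also have "Q (t @ [(q, c1), (Suc L, c2)]) (g(Suc L := w, Suc (Suc L) := u)) h 1 x =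
       Q (t @ [(q, c1)]) (g(Suc L := Dw)) h 1 x"
      unfolding Dw_def L_def by (rule collapse[OF wf])
    finally show ?thesis .
  qed
  have pdk: "pd k (\<lambda>y. \<Sum>l\<in>UNIV. w y $ l * pd l E y) x =
      (\<Sum>l\<in>UNIV. pd k (\<lambda>y. w y $ l) x * pd l E x + w x $ l * pd k (pd l E) x)" for k
    by (simp add: pd_sum pd_mult lined_mult lw lpd)
  have ii: "(\<Sum>k\<in>UNIV. u x $ k * pd k (\<lambda>y. \<Sum>l\<in>UNIV. w y $ l * pd l E y) x) =
      (\<Sum>l\<in>UNIV. Dw x $ l * pd l E x) +
      (\<Sum>k\<in>UNIV. \<Sum>l\<in>UNIV. u x $ k * w x $ l * pd k (pd l E) x)"
  proof -
    have "(\<Sum>k\<in>UNIV. u x $ k * pd k (\<lambda>y. \<Sum>l\<in>UNIV. w y $ l * pd l E y) x) =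
      (\<Sum>k\<in>UNIV. \<Sum>l\<in>UNIV. u x $ k * pd k (\<lambda>y. w y $ l) x * pd l E x) +
      (\<Sum>k\<in>UNIV. \<Sum>l\<in>UNIV. u x $ k * w x $ l * pd k (pd l E) x)"
      unfolding pdk by (simp add: sum_distrib_left distrib_left sum.distrib mult.assoc)
    also have "(\<Sum>k\<in>UNIV. \<Sum>l\<in>UNIV. u x $ k * pd k (\<lambda>y. w y $ l) x * pd l E x) = (\<Sum>l\<in>UNIV. Dw x $ l * pd l E x)"
      by (subst sum.swap) (simp add: Dw_def sum_distrib_right)
    finally show ?thesis .
  qed
  have Dwq: "(\<Sum>l\<in>UNIV. Dw x $ l * pd l E x) = (\<Sum>q=1..L. Q (t @ [(q, c1)]) (g(Suc L := Dw)) h 1 x)"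
  proof -
    have "(\<Sum>k\<in>UNIV. Dw x $ k * pd k (Q t g h 1) x) = (\<Sum>p=1..length t. Q (t @ [(p, c1)]) (g(Suc (length t) := Dw)) h 1 x)"
      by (rule DQ1[OF wf LM' sm hM])
    then show ?thesis by (simp add: E_def L_def)
  qed
  have "(\<Sum>k\<in>UNIV. \<Sum>l\<in>UNIV. u x $ k * w x $ l * pd k (pd l E) x) =
     (\<Sum>q=1..L. \<Sum>k\<in>UNIV. u x $ k * pd k (Q (t @ [(q, c1)]) gq h 1) x) - (\<Sum>l\<in>UNIV. Dw x $ l * pd l E x)"
    using i1 ii by simp
  also have "\<dots> = (\<Sum>q=1..L. \<Sum>p=1..L. Q (t @ [(q, c1), (p, c2)]) (g(Suc L := w, Suc (Suc L) := u)) h 1 x)"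
    unfolding Dwq using i2 by (simp add: sum.distrib)
  finally show ?thesis by (simp add: E_def L_def)
qed




declare nodeF.simps[simp del]

definition G :: "(real^'d::finite \<Rightarrow> real^'d) \<Rightarrow> (real^'d \<Rightarrow> real^'m::finite^'d) \<Rightarrow> tree \<Rightarrow> (nat \<Rightarrow> 'm) \<Rightarrow> nat \<Rightarrow> real^'d \<Rightarrow> real^'d" where
  "G a b t js i = (case col t i of Tau \<Rightarrow> a | Sigma k \<Rightarrow> (\<lambda>y. \<chi> I. b y $ I $ js k) | Gamma \<Rightarrow> (\<lambda>y. 0))"

lemma pds_zero: "pds (\<lambda>y::real^'d::finite. 0) Js = (\<lambda>y. 0)"
  by (induction Js) (auto simp: pd_const)

lemma dapp_zero: "dapp (\<lambda>y::real^'d::finite. 0) vs x = 0"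
  by (simp add: dapp_def pds_zero)

lemma nodeF_myN: "nodeF a b t js i x = myN t (G a b t js) i x"
proof (induction a b t js i x rule: nodeF.induct)
  case (1 a b t js i x)
  show ?case
  proof (cases "col t i")
    case Gamma
    show ?thesis unfolding nodeF.simps[of a b t js i x] myN.simps[of t "G a b t js" i x]
      using Gamma by (simp add: G_def dapp_zero vec_eq_iff)
  next
    case Tau
    have m: "map (\<lambda>c. nodeF a b t js c x) (children t i) = map (\<lambda>c. myN t (G a b t js) c x) (children t i)"
      by (rule map_cong[OF refl]) (use "1.IH" Tau in blast)
    show ?thesis unfolding nodeF.simps[of a b t js i x] myN.simps[of t "G a b t js" i x] m
      using Tau by (simp add: G_def)
  next
    case (Sigma k)
    have m: "map (\<lambda>c. nodeF a b t js c x) (children t i) = map (\<lambda>c. myN t (G a b t js) c x) (children t i)"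
      by (rule map_cong[OF refl]) (use "1.IH" Sigma in blast)
    show ?thesis unfolding nodeF.simps[of a b t js i x] myN.simps[of t "G a b t js" i x] m
      using Sigma by (simp add: G_def)
  qed
qed

lemma elemF_Q: "elemF f a b t js x = Q t (G a b t js) f 1 x"
  unfolding elemF_def Q_def by (simp only: nodeF_myN)

lemma Q_cong_g: assumes "\<And>i. i \<le> length t \<Longrightarrow> g1 i = g2 i"
  shows "Q t g1 h 1 x = Q t g2 h 1 x"
proof -
  let ?S = "{j. j \<le> length t}"
  have H: "\<forall>j\<in>?S. children t j = children t j \<and> g1 j = g2 j \<and> set (children t j) \<subseteq> ?S \<union> {}"
    using assms by (auto simp: children_set)
  have Z: "\<forall>z\<in>{}. myN t g1 z x = myN t g2 z x" by simp
  have "myN t g1 c x = myN t g2 c x" if "c \<in> set (children t 1)" for c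
    using that by (intro mp[OF mp[OF mp[OF myN_eq_aux H] Z]]) (auto simp: children_set)
  then have ME: "map (\<lambda>c. myN t g1 c x) (children t 1) = map (\<lambda>c. myN t g2 c x) (children t 1)"
    by (rule map_cong[OF refl])
  show ?thesis unfolding Q_def by (simp only: ME)
qed

lemma LTS_wft: "t \<in> LTS \<Longrightarrow> wft t"
proof (induction rule: LTS.induct)
  case root then show ?case by (simp add: wft_def)
next
  case (tau t p) show ?case by (rule wft_snoc[OF tau.IH tau.hyps(2,3)])
next
  case (sigma t p q)
  have "wft (t @ [(p, Sigma (s_nodes t div 2 + 1))])" using sigma by (intro wft_snoc) auto
  then have "wft ((t @ [(p, Sigma (s_nodes t div 2 + 1))]) @ [(q, Sigma (s_nodes t div 2 + 1))])"
    using sigma by (intro wft_snoc) auto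
  then show ?case by simp
qed

lemma s_tau: "s_nodes (t @ [(p, Tau)]) = s_nodes t" by (simp add: s_nodes_def)
lemma d_tau: "d_nodes (t @ [(p, Tau)]) = Suc (d_nodes t)" by (simp add: d_nodes_def)
lemma s_sig: "s_nodes (t @ [(p, Sigma k), (q, Sigma k')]) = s_nodes t + 2" by (simp add: s_nodes_def)
lemma d_sig: "d_nodes (t @ [(p, Sigma k), (q, Sigma k')]) = d_nodes t" by (simp add: d_nodes_def)

lemma rho_tau: "rho (t @ [(p, Tau)]) = Suc (rho t)" by (simp add: rho_def s_tau d_tau)
lemma rho_sig: "rho (t @ [(p, Sigma k), (q, Sigma k')]) = Suc (rho t)" by (simp add: rho_def s_sig d_sig)

lemma LTS_len: "t \<in> LTS \<Longrightarrow> length t = 1 + d_nodes t + s_nodes t \<and> even (s_nodes t)"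
proof (induction rule: LTS.induct)
  case root then show ?case by (simp add: s_nodes_def d_nodes_def)
next
  case (tau t p) then show ?case by (simp add: s_tau d_tau)
next
  case (sigma t p q) then show ?case by (simp add: s_sig d_sig)
qed

lemma LTS_len_rho: "t \<in> LTS \<Longrightarrow> length t \<le> 1 + 2 * rho t"
  using LTS_len[of t] by (auto simp: rho_def elim!: evenE)

lemma LTS_sig: "t \<in> LTS \<Longrightarrow> e \<in> set t \<Longrightarrow> snd e = Sigma k \<Longrightarrow> k \<le> s_nodes t div 2"
proof (induction arbitrary: e rule: LTS.induct)
  case root then show ?case by auto
next
  case (tau t p) then show ?case by (cases e) (auto simp: s_tau)
next
  case (sigma t p q)
  then show ?case by (cases e) (fastforce simp: s_sig)
qed

lemma LTS_root_rho: "t \<in> LTS \<Longrightarrow> rho t = 0 \<Longrightarrow> t = [(0, Gamma)]"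
  by (erule LTS.cases) (auto simp: rho_tau rho_sig)




lemma G_smooth:
  assumes aM: "\<forall>I. Ck M (\<lambda>y. a y $ I)" and bM: "\<forall>k j. Ck M (\<lambda>y. b y $ k $ j)"
  shows "\<forall>j I. Ck M (\<lambda>y. G a b t js j y $ I)"
proof (intro allI)
  fix j I
  show "Ck M (\<lambda>y. G a b t js j y $ I)"
  proof (cases "col t j")
    case Gamma then show ?thesis by (simp add: G_def Ck_const)
  next
    case Tau then show ?thesis using aM by (simp add: G_def)
  next
    case (Sigma k) then show ?thesis using bM by (simp add: G_def)
  qed
qed

lemma G_tau: "1 \<le> length t \<Longrightarrow> nd \<le> Suc (length t) \<Longrightarrow>
    G a b (t @ [(p, Tau)]) js nd = ((G a b t js)(Suc (length t) := a)) nd"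
  by (cases "nd = Suc (length t)") (auto simp: G_def col_def nth_append)

lemma G_sig:
  assumes t: "t \<in> LTS" and K: "K = s_nodes t div 2" and i: "i \<le> Suc (Suc (length t))"
  shows "G a b (t @ [(p, Sigma (Suc K)), (q, Sigma (Suc K))]) (js(Suc K := j)) i =
    ((G a b t js)(Suc (length t) := (\<lambda>y. \<chi> I. b y $ I $ j), Suc (Suc (length t)) := (\<lambda>y. \<chi> I. b y $ I $ j))) i"
proof -
  have L1: "1 \<le> length t" using LTS_wft[OF t] by (simp add: wft_def)
  consider "i = Suc (length t)" | "i = Suc (Suc (length t))" | "i \<le> length t" using i by linarith
  then show ?thesis
  proof cases
    case 3
    then have ii: "i - 1 < length t" using L1 by simp
    have cl: "col (t @ [(p, Sigma (Suc K)), (q, Sigma (Suc K))]) i = col t i"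
      using ii by (simp add: col_def nth_append)
    have "G a b (t @ [(p, Sigma (Suc K)), (q, Sigma (Suc K))]) (js(Suc K := j)) i = G a b t js i"
    proof (cases "col t i")
      case (Sigma k)
      have "t ! (i - 1) \<in> set t" using ii by simp
      then have "k \<le> K" using LTS_sig[OF t, of "t ! (i - 1)" k] Sigma K by (simp add: col_def)
      then show ?thesis using Sigma cl by (simp add: G_def)
    qed (use cl in \<open>simp_all add: G_def\<close>)
    then show ?thesis using 3 by simp
  qed (auto simp: G_def col_def nth_append)
qed

lemma elemF_smooth:
  assumes fM: "Ck M f" and aM: "\<forall>I. Ck M (\<lambda>y. a y $ I)" and bM: "\<forall>k j. Ck M (\<lambda>y. b y $ k $ j)"
    and LM: "length t \<le> M"
  shows "Ck (M - (length t - 1)) (elemF f a b t js)"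
proof -
  have "elemF f a b t js = Q t (G a b t js) f 1" by (rule ext) (rule elemF_Q)
  then show ?thesis using Ck_Q[OF LM G_smooth[OF aM bM] fM] by simp
qed

lemma tau_step:
  assumes fM: "Ck M f" and aM: "\<forall>I. Ck M (\<lambda>y. a y $ I)" and bM: "\<forall>k j. Ck M (\<lambda>y. b y $ k $ j)"
    and t: "t \<in> LTS" and LM: "length t \<le> M"
  shows "(\<Sum>k\<in>UNIV. a x $ k * pd k (elemF f a b t js) x) = (\<Sum>p=1..length t. elemF f a b (t @ [(p, Tau)]) js x)"
proof -
  have wf: "wft t" by (rule LTS_wft[OF t])
  have L1: "1 \<le> length t" using wf by (simp add: wft_def)
  have e: "elemF f a b t js = Q t (G a b t js) f 1" by (rule ext) (rule elemF_Q)
  have "(\<Sum>k\<in>UNIV. a x $ k * pd k (Q t (G a b t js) f 1) x) =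
     (\<Sum>p=1..length t. Q (t @ [(p, Tau)]) ((G a b t js)(Suc (length t) := a)) f 1 x)"
    by (rule DQ1[OF wf LM G_smooth[OF aM bM] fM])
  also have "\<dots> = (\<Sum>p=1..length t. elemF f a b (t @ [(p, Tau)]) js x)"
  proof (rule sum.cong[OF refl])
    fix p assume "p \<in> {1..length t}"
    have "Q (t @ [(p, Tau)]) ((G a b t js)(Suc (length t) := a)) f 1 x = Q (t @ [(p, Tau)]) (G a b (t @ [(p, Tau)]) js) f 1 x"
      by (rule Q_cong_g) (simp add: G_tau[OF L1])
    then show "Q (t @ [(p, Tau)]) ((G a b t js)(Suc (length t) := a)) f 1 x = elemF f a b (t @ [(p, Tau)]) js x"
      by (simp add: elemF_Q)
  qed
  finally show ?thesis unfolding e .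
qed

lemma sig_step:
  assumes fM: "Ck M f" and aM: "\<forall>I. Ck M (\<lambda>y. a y $ I)" and bM: "\<forall>k j. Ck M (\<lambda>y. b y $ k $ j)"
    and t: "t \<in> LTS" and LM: "Suc (length t) \<le> M" and K: "K = s_nodes t div 2"
  shows "(\<Sum>k\<in>UNIV. \<Sum>l\<in>UNIV. b x $ k $ j * b x $ l $ j * pd k (pd l (elemF f a b t js)) x) =
    (\<Sum>q=1..length t. \<Sum>p=1..length t. elemF f a b (t @ [(q, Sigma (K+1)), (p, Sigma (K+1))]) (js(K+1 := j)) x)"
proof -
  have wf: "wft t" by (rule LTS_wft[OF t])
  define bj where "bj = (\<lambda>y. \<chi> I. b y $ I $ j)"
  have bjM: "\<forall>I. Ck M (\<lambda>y. bj y $ I)" using bM by (simp add: bj_def)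
  have e: "elemF f a b t js = Q t (G a b t js) f 1" by (rule ext) (rule elemF_Q)
  have "(\<Sum>k\<in>UNIV. \<Sum>l\<in>UNIV. bj x $ k * bj x $ l * pd k (pd l (Q t (G a b t js) f 1)) x) =
    (\<Sum>q=1..length t. \<Sum>p=1..length t. Q (t @ [(q, Sigma (K+1)), (p, Sigma (K+1))])
       ((G a b t js)(Suc (length t) := bj, Suc (Suc (length t)) := bj)) f 1 x)"
    by (rule D2[OF wf LM G_smooth[OF aM bM] fM bjM])
  also have "\<dots> = (\<Sum>q=1..length t. \<Sum>p=1..length t. elemF f a b (t @ [(q, Sigma (K+1)), (p, Sigma (K+1))]) (js(K+1 := j)) x)"
  proof (intro sum.cong refl)
    fix q p
    have "Q (t @ [(q, Sigma (K+1)), (p, Sigma (K+1))]) ((G a b t js)(Suc (length t) := bj, Suc (Suc (length t)) := bj)) f 1 x =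
      Q (t @ [(q, Sigma (K+1)), (p, Sigma (K+1))]) (G a b (t @ [(q, Sigma (K+1)), (p, Sigma (K+1))]) (js(K+1 := j))) f 1 x"
      by (rule Q_cong_g) (simp add: G_sig[OF t K] bj_def)
    then show "Q (t @ [(q, Sigma (K+1)), (p, Sigma (K+1))]) ((G a b t js)(Suc (length t) := bj, Suc (Suc (length t)) := bj)) f 1 x =
      elemF f a b (t @ [(q, Sigma (K+1)), (p, Sigma (K+1))]) (js(K+1 := j)) x"
      by (simp add: elemF_Q)
  qed
  finally show ?thesis unfolding e by (simp add: bj_def)
qed




lemma pd_cm_sum: "finite A \<Longrightarrow> (\<And>i. i \<in> A \<Longrightarrow> lined (H i)) \<Longrightarrow>
   pd k (\<lambda>y. \<Sum>i\<in>A. c i * H i y) x = (\<Sum>i\<in>A. c i * pd k (H i) x)"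
  by (simp add: pd_sum lined_cmult pd_cmult)

lemma lined_cm_sum: "(\<And>i. i \<in> A \<Longrightarrow> lined (H i)) \<Longrightarrow> lined (\<lambda>y. \<Sum>i\<in>A. c i * H i y)"
  by (intro lined_sum lined_cmult) auto

lemma L0_lin:
  fixes H :: "'i \<Rightarrow> real^'d::finite \<Rightarrow> real" and b :: "real^'d \<Rightarrow> real^'m::finite^'d"
  assumes A: "finite A" and l1: "\<And>i. i \<in> A \<Longrightarrow> lined (H i)" and l2: "\<And>i l. i \<in> A \<Longrightarrow> lined (pd l (H i))"
  shows "L0 a b (\<lambda>y. \<Sum>i\<in>A. c i * H i y) x = (\<Sum>i\<in>A. c i * L0 a b (H i) x)"
proof -
  have p1: "pd k (\<lambda>y. \<Sum>i\<in>A. c i * H i y) = (\<lambda>y. \<Sum>i\<in>A. c i * pd k (H i) y)" for k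
    by (rule ext) (rule pd_cm_sum[OF A l1])
  have p2: "pd k (pd l (\<lambda>y. \<Sum>i\<in>A. c i * H i y)) x = (\<Sum>i\<in>A. c i * pd k (pd l (H i)) x)" for k l
    unfolding p1 by (rule pd_cm_sum[OF A l2])
  have s1: "(\<Sum>k\<in>UNIV. a x $ k * (\<Sum>i\<in>A. c i * pd k (H i) x)) = (\<Sum>i\<in>A. c i * (\<Sum>k\<in>UNIV. a x $ k * pd k (H i) x))"
    by (simp add: sum_distrib_left sum.swap[of _ "UNIV::'d set" A] mult.left_commute)
  have s2: "(\<Sum>k\<in>UNIV. \<Sum>l\<in>UNIV. \<Sum>j\<in>UNIV. b x $ k $ j * b x $ l $ j * (\<Sum>i\<in>A. c i * pd k (pd l (H i)) x)) =
     (\<Sum>i\<in>A. c i * (\<Sum>k\<in>UNIV. \<Sum>l\<in>UNIV. \<Sum>j\<in>UNIV. b x $ k $ j * b x $ l $ j * pd k (pd l (H i)) x))"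
  proof -
    have "(\<Sum>k\<in>UNIV. \<Sum>l\<in>UNIV. \<Sum>j\<in>UNIV. b x $ k $ j * b x $ l $ j * (\<Sum>i\<in>A. c i * pd k (pd l (H i)) x)) =
      (\<Sum>k\<in>UNIV. \<Sum>l\<in>UNIV. \<Sum>i\<in>A. c i * (\<Sum>j\<in>UNIV. b x $ k $ j * b x $ l $ j * pd k (pd l (H i)) x))"
      by (simp add: sum_distrib_left sum.swap[of _ "UNIV::'m set" A] mult.left_commute)
    also have "\<dots> = (\<Sum>k\<in>UNIV. \<Sum>i\<in>A. c i * (\<Sum>l\<in>UNIV. \<Sum>j\<in>UNIV. b x $ k $ j * b x $ l $ j * pd k (pd l (H i)) x))"
      by (simp add: sum_distrib_left sum.swap[of _ "UNIV::'d set" A])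
    also have "\<dots> = (\<Sum>i\<in>A. c i * (\<Sum>k\<in>UNIV. \<Sum>l\<in>UNIV. \<Sum>j\<in>UNIV. b x $ k $ j * b x $ l $ j * pd k (pd l (H i)) x))"
      by (simp add: sum_distrib_left sum.swap[of _ "UNIV::'d set" A])
    finally show ?thesis .
  qed
  show ?thesis unfolding L0_def p2 unfolding p1 s1 s2
    by (simp add: sum.distrib distrib_left sum_distrib_left mult.left_commute)
qed

lemma L0_elemF:
  assumes fM: "Ck M f" and aM: "\<forall>I. Ck M (\<lambda>y. a y $ I)" and bM: "\<forall>k j. Ck M (\<lambda>y. b y $ k $ j)"
    and t: "t \<in> LTS" and LM: "Suc (length t) \<le> M" and K: "K = s_nodes t div 2"
  shows "L0 a b (elemF f a b t js) x = (\<Sum>p=1..length t. elemF f a b (t @ [(p, Tau)]) js x) +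
     1/2 * (\<Sum>j\<in>UNIV. \<Sum>q=1..length t. \<Sum>p=1..length t.
        elemF f a b (t @ [(q, Sigma (K+1)), (p, Sigma (K+1))]) (js(K+1 := j)) x)"
proof -
  have "(\<Sum>k\<in>UNIV. \<Sum>l\<in>UNIV. \<Sum>j\<in>UNIV. b x $ k $ j * b x $ l $ j * pd k (pd l (elemF f a b t js)) x) =
     (\<Sum>k\<in>UNIV. \<Sum>j\<in>UNIV. \<Sum>l\<in>UNIV. b x $ k $ j * b x $ l $ j * pd k (pd l (elemF f a b t js)) x)"
    by (rule sum.cong[OF refl]) (rule sum.swap)
  also have "\<dots> = (\<Sum>j\<in>UNIV. \<Sum>k\<in>UNIV. \<Sum>l\<in>UNIV. b x $ k $ j * b x $ l $ j * pd k (pd l (elemF f a b t js)) x)"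
    by (rule sum.swap)
  also have "\<dots> = (\<Sum>j\<in>UNIV. \<Sum>q=1..length t. \<Sum>p=1..length t.
        elemF f a b (t @ [(q, Sigma (K+1)), (p, Sigma (K+1))]) (js(K+1 := j)) x)"
    by (rule sum.cong[OF refl]) (rule sig_step[OF fM aM bM t LM K])
  finally have B: "(\<Sum>k\<in>UNIV. \<Sum>l\<in>UNIV. \<Sum>j\<in>UNIV. b x $ k $ j * b x $ l $ j * pd k (pd l (elemF f a b t js)) x) =
     (\<Sum>j\<in>UNIV. \<Sum>q=1..length t. \<Sum>p=1..length t.
        elemF f a b (t @ [(q, Sigma (K+1)), (p, Sigma (K+1))]) (js(K+1 := j)) x)" .
  have A: "(\<Sum>k\<in>UNIV. a x $ k * pd k (elemF f a b t js) x) = (\<Sum>p=1..length t. elemF f a b (t @ [(p, Tau)]) js x)"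
    by (rule tau_step[OF fM aM bM t]) (use LM in simp)
  show ?thesis unfolding L0_def A B ..
qed

definition TT :: "nat \<Rightarrow> tree set" where "TT n = {t \<in> LTS. rho t = n}"

definition TA :: "nat \<Rightarrow> tree set" where
  "TA n = (\<lambda>(t, p). t @ [(p, Tau)]) ` (SIGMA t:TT n. {1..length t})"
definition SG :: "nat \<Rightarrow> tree set" where
  "SG n = (\<lambda>(t, p, q). t @ [(p, Sigma (s_nodes t div 2 + 1)), (q, Sigma (s_nodes t div 2 + 1))]) `
     (SIGMA t:TT n. {1..length t} \<times> {1..length t})"

lemma TT_0: "TT 0 = {[(0, Gamma)]}"
proof -
  have r: "rho [(0, Gamma)] = 0" by (simp add: rho_def s_nodes_def d_nodes_def)
  show ?thesis unfolding TT_def using LTS_root_rho LTS.root r by blast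
qed

lemma TT_Suc: "TT (Suc n) = TA n \<union> SG n"
proof
  show "TT (Suc n) \<subseteq> TA n \<union> SG n"
  proof
    fix t' assume "t' \<in> TT (Suc n)"
    then have t': "t' \<in> LTS" "rho t' = Suc n" by (auto simp: TT_def)
    from t'(1) show "t' \<in> TA n \<union> SG n"
    proof cases
      case root
      have "rho [(0, Gamma)] = 0" by (simp add: rho_def s_nodes_def d_nodes_def)
      then show ?thesis using t'(2) root by simp
    next
      case (tau t p)
      then have "t \<in> TT n" using t'(2) by (simp add: TT_def rho_tau)
      then have "(t, p) \<in> (SIGMA t:TT n. {1..length t})" using tau by simp
      then have "t' \<in> TA n" unfolding TA_def tau(1) by (rule rev_image_eqI) simp
      then show ?thesis by simp
    next
      case (sigma t p q)
      then have "t \<in> TT n" using t'(2) by (simp add: TT_def rho_sig)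
      then have "(t, p, q) \<in> (SIGMA t:TT n. {1..length t} \<times> {1..length t})" using sigma by simp
      then have "t' \<in> SG n" unfolding SG_def sigma(1) by (rule rev_image_eqI) simp
      then show ?thesis by simp
    qed
  qed
  show "TA n \<union> SG n \<subseteq> TT (Suc n)"
  proof
    fix t' assume "t' \<in> TA n \<union> SG n"
    then consider "t' \<in> TA n" | "t' \<in> SG n" by blast
    then show "t' \<in> TT (Suc n)"
    proof cases
      case 1
      then obtain t p where tp: "t \<in> TT n" "p \<in> {1..length t}" "t' = t @ [(p, Tau)]"
        unfolding TA_def by auto
      have "t' \<in> LTS" using tp LTS.tau[of t p] by (simp add: TT_def)
      then show ?thesis using tp by (simp add: TT_def rho_tau)
    next
      case 2
      then obtain t p q where tp: "t \<in> TT n" "p \<in> {1..length t}" "q \<in> {1..length t}"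
        "t' = t @ [(p, Sigma (s_nodes t div 2 + 1)), (q, Sigma (s_nodes t div 2 + 1))]"
        unfolding SG_def by auto
      have "t' \<in> LTS" using tp LTS.sigma[of t p q] by (simp add: TT_def)
      then show ?thesis using tp by (simp add: TT_def rho_sig)
    qed
  qed
qed

lemma TT_fin: "finite (TT n)"
proof (induction n)
  case 0 then show ?case by (simp add: TT_0)
next
  case (Suc n) then show ?case by (simp add: TT_Suc TA_def SG_def)
qed

lemma app2_inj: "xs @ [a1, b1] = ys @ [a2, b2] \<Longrightarrow> xs = ys \<and> a1 = a2 \<and> b1 = b2"
proof -
  assume "xs @ [a1, b1] = ys @ [a2, b2]"
  then have "(xs @ [a1]) @ [b1] = (ys @ [a2]) @ [b2]" by simp
  then show ?thesis by simp
qed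

lemma TA_inj: "inj_on (\<lambda>(t, p). t @ [(p, Tau)]) (SIGMA t:TT n. {1..length t})"
  by (auto intro!: inj_onI)

lemma SG_inj: "inj_on (\<lambda>(t, p, q). t @ [(p, Sigma (s_nodes t div 2 + 1)), (q, Sigma (s_nodes t div 2 + 1))])
     (SIGMA t:TT n. {1..length t} \<times> {1..length t})"
  by (auto intro!: inj_onI dest!: app2_inj)

lemma TA_SG_disj: "TA n \<inter> SG n = {}"
proof -
  have "last t1 \<noteq> last t2" if "t1 \<in> TA n" "t2 \<in> SG n" for t1 t2
    using that unfolding TA_def SG_def by auto
  then show ?thesis by blast
qed




lemma reorder4: "(\<Sum>a\<in>A. \<Sum>b\<in>B. \<Sum>c\<in>C. \<Sum>d\<in>D. f a b c d) = (\<Sum>c\<in>C. \<Sum>d\<in>D. \<Sum>b\<in>B. \<Sum>a\<in>A. f a b c d)"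
proof -
  have "(\<Sum>a\<in>A. \<Sum>b\<in>B. \<Sum>c\<in>C. \<Sum>d\<in>D. f a b c d) = (\<Sum>b\<in>B. \<Sum>a\<in>A. \<Sum>c\<in>C. \<Sum>d\<in>D. f a b c d)"
    by (rule sum.swap)
  also have "\<dots> = (\<Sum>b\<in>B. \<Sum>c\<in>C. \<Sum>a\<in>A. \<Sum>d\<in>D. f a b c d)"
    by (rule sum.cong[OF refl]) (rule sum.swap)
  also have "\<dots> = (\<Sum>b\<in>B. \<Sum>c\<in>C. \<Sum>d\<in>D. \<Sum>a\<in>A. f a b c d)"
    by (rule sum.cong[OF refl], rule sum.cong[OF refl]) (rule sum.swap)
  also have "\<dots> = (\<Sum>c\<in>C. \<Sum>b\<in>B. \<Sum>d\<in>D. \<Sum>a\<in>A. f a b c d)"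
    by (rule sum.swap)
  also have "\<dots> = (\<Sum>c\<in>C. \<Sum>d\<in>D. \<Sum>b\<in>B. \<Sum>a\<in>A. f a b c d)"
    by (rule sum.cong[OF refl]) (rule sum.swap)
  finally show ?thesis .
qed

lemma per_t:
  fixes c :: real
  shows "(\<Sum>js\<in>P. (1/c) * ((\<Sum>p\<in>R. X js p) + 1/2 * (\<Sum>j\<in>J. \<Sum>q\<in>R. \<Sum>p\<in>R. Y js j q p))) =
    (\<Sum>p\<in>R. \<Sum>js\<in>P. X js p / c) + (\<Sum>q\<in>R. \<Sum>p\<in>R. \<Sum>j\<in>J. \<Sum>js\<in>P. Y js j q p / (2 * c))"
proof -
  have "(\<Sum>js\<in>P. (1/c) * ((\<Sum>p\<in>R. X js p) + 1/2 * (\<Sum>j\<in>J. \<Sum>q\<in>R. \<Sum>p\<in>R. Y js j q p))) =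
     (\<Sum>js\<in>P. \<Sum>p\<in>R. X js p / c) + (\<Sum>js\<in>P. \<Sum>j\<in>J. \<Sum>q\<in>R. \<Sum>p\<in>R. Y js j q p / (2 * c))"
    by (simp add: sum.distrib distrib_left sum_distrib_left mult.commute)
  also have "(\<Sum>js\<in>P. \<Sum>p\<in>R. X js p / c) = (\<Sum>p\<in>R. \<Sum>js\<in>P. X js p / c)" by (rule sum.swap)
  also have "(\<Sum>js\<in>P. \<Sum>j\<in>J. \<Sum>q\<in>R. \<Sum>p\<in>R. Y js j q p / (2 * c)) = (\<Sum>q\<in>R. \<Sum>p\<in>R. \<Sum>j\<in>J. \<Sum>js\<in>P. Y js j q p / (2 * c))"
    by (rule reorder4)
  finally show ?thesis .
qed

definition PJ :: "tree \<Rightarrow> (nat \<Rightarrow> 'm) set" where "PJ t = {1..s_nodes t div 2} \<rightarrow>\<^sub>E UNIV"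

lemma PJ_fin: "finite (PJ t :: (nat \<Rightarrow> 'm::finite) set)"
  unfolding PJ_def by (rule finite_PiE) auto

definition SS :: "(real^'d::finite \<Rightarrow> real) \<Rightarrow> (real^'d \<Rightarrow> real^'d) \<Rightarrow> (real^'d \<Rightarrow> real^'m::finite^'d) \<Rightarrow> nat \<Rightarrow> real^'d \<Rightarrow> real" where
  "SS f a b n x = (\<Sum>t\<in>TT n. \<Sum>js\<in>PJ t. elemF f a b t js x / 2 ^ (s_nodes t div 2))"

lemma sum_PJ_sig':
  "(\<Sum>js\<in>{Suc 0..Suc K} \<rightarrow>\<^sub>E (UNIV::'m::finite set). F js) = (\<Sum>j\<in>UNIV. \<Sum>js\<in>{Suc 0..K} \<rightarrow>\<^sub>E UNIV. F (js(Suc K := j)))"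
proof -
  have "{Suc 0..Suc K} = insert (Suc K) {Suc 0..K}" by auto
  then show ?thesis by (simp add: sum_PiE_insert)
qed

lemma PJ_sig: "PJ (t @ [(p, Sigma k), (q, Sigma k')]) = {1..Suc (s_nodes t div 2)} \<rightarrow>\<^sub>E UNIV"
  by (simp add: PJ_def s_sig)

lemma sum_PJ_sig:
  "(\<Sum>js\<in>{1..Suc K} \<rightarrow>\<^sub>E (UNIV::'m::finite set). F js) = (\<Sum>j\<in>UNIV. \<Sum>js\<in>{1..K} \<rightarrow>\<^sub>E UNIV. F (js(Suc K := j)))"
proof -
  have "{1..Suc K} = insert (Suc K) {1..K}" by auto
  then show ?thesis by (simp add: sum_PiE_insert)
qed

lemma SS_step:
  fixes f :: "real^'d::finite \<Rightarrow> real" and a :: "real^'d \<Rightarrow> real^'d" and b :: "real^'d \<Rightarrow> real^'m::finite^'d"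
  assumes fM: "Ck (2 * n) f" and aM: "\<forall>I. Ck (2 * n) (\<lambda>y. a y $ I)" and bM: "\<forall>k j. Ck (2 * n) (\<lambda>y. b y $ k $ j)"
    and nn: "Suc n' \<le> n"
  shows "L0 a b (SS f a b n') x = SS f a b (Suc n') x"
proof -
  define M where "M = 2 * n"
  note fM = fM[folded M_def] and aM = aM[folded M_def] and bM = bM[folded M_def]
  define K where "K t = s_nodes t div 2" for t :: tree
  have tb: "t \<in> LTS \<and> Suc (length t) \<le> M" if "t \<in> TT n'" for t
    using that LTS_len_rho[of t] nn by (auto simp: TT_def M_def)
  have ck2: "Ck 2 (elemF f a b t js)" if "t \<in> TT n'" for t js
  proof -
    have X: "Ck (M - (length t - 1)) (elemF f a b t js)"
      by (rule elemF_smooth[OF fM aM bM]) (use tb[OF that] in simp)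
    show ?thesis by (rule Ck_le[OF _ X]) (use that LTS_len_rho[of t] nn in \<open>auto simp: TT_def M_def\<close>)
  qed
  have l1: "lined (elemF f a b t js)" if "t \<in> TT n'" for t js
    using ck2[OF that] by (intro Ck_lined'[of 2]) auto
  have l2: "lined (pd l (elemF f a b t js))" if "t \<in> TT n'" for t js l
  proof -
    have "Ck (Suc (Suc 0)) (elemF f a b t js)" using ck2[OF that] by (simp add: numeral_2_eq_2)
    then have "Ck (Suc 0) (pd l (elemF f a b t js))" by (rule Ck_pd)
    then show ?thesis by (intro Ck_lined'[of "Suc 0"]) auto
  qed
  define A where "A = (SIGMA t:TT n'. (PJ t :: (nat \<Rightarrow> 'm) set))"
  have finA: "finite A" unfolding A_def using TT_fin PJ_fin by (intro finite_SigmaI) auto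
  have SSe: "SS f a b n' = (\<lambda>y. \<Sum>i\<in>A. (1 / 2 ^ K (fst i)) * elemF f a b (fst i) (snd i) y)"
  proof (rule ext)
    fix y
    show "SS f a b n' y = (\<Sum>i\<in>A. (1 / 2 ^ K (fst i)) * elemF f a b (fst i) (snd i) y)"
      unfolding SS_def A_def K_def using TT_fin PJ_fin by (subst sum.Sigma) (auto simp: split_def)
  qed
  have "L0 a b (SS f a b n') x = (\<Sum>i\<in>A. (1 / 2 ^ K (fst i)) * L0 a b (elemF f a b (fst i) (snd i)) x)"
    unfolding SSe by (rule L0_lin[OF finA]) (auto simp: A_def l1 l2)
  also have "\<dots> = (\<Sum>t\<in>TT n'. \<Sum>js\<in>PJ t. (1 / 2 ^ K t) * L0 a b (elemF f a b t js) x)"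
    unfolding A_def using TT_fin PJ_fin by (subst sum.Sigma) (auto simp: split_def)
  also have "\<dots> = (\<Sum>t\<in>TT n'. \<Sum>js\<in>PJ t. (1 / 2 ^ K t) * ((\<Sum>p=1..length t. elemF f a b (t @ [(p, Tau)]) js x) +
     1/2 * (\<Sum>j\<in>UNIV. \<Sum>q=1..length t. \<Sum>p=1..length t.
        elemF f a b (t @ [(q, Sigma (K t+1)), (p, Sigma (K t+1))]) (js(K t+1 := j)) x)))"
    by (intro sum.cong refl arg_cong2[where f="(*)"] L0_elemF[OF fM aM bM]) (use tb in \<open>auto simp: K_def\<close>)
  also have "\<dots> = (\<Sum>t\<in>TT n'. (\<Sum>p=1..length t. \<Sum>js\<in>PJ t. elemF f a b (t @ [(p, Tau)]) js x / 2 ^ K t) +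
      (\<Sum>q=1..length t. \<Sum>p=1..length t. \<Sum>j\<in>UNIV. \<Sum>js\<in>PJ t.
        elemF f a b (t @ [(q, Sigma (K t+1)), (p, Sigma (K t+1))]) (js(K t+1 := j)) x / (2 * 2 ^ K t)))"
    by (rule sum.cong[OF refl]) (rule per_t)
  finally have LHS: "L0 a b (SS f a b n') x = \<dots>" .
  define F where "F t' = (\<Sum>js\<in>PJ t'. elemF f a b t' js x / 2 ^ (s_nodes t' div 2))" for t'
  have finTA: "finite (TA n')" unfolding TA_def using TT_fin by auto
  have finSG: "finite (SG n')" unfolding SG_def using TT_fin by auto
  have "SS f a b (Suc n') x = (\<Sum>t'\<in>TA n'. F t') + (\<Sum>t'\<in>SG n'. F t')"
    unfolding SS_def TT_Suc F_def by (rule sum.union_disjoint[OF finTA finSG TA_SG_disj])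
  also have "(\<Sum>t'\<in>TA n'. F t') = (\<Sum>t\<in>TT n'. \<Sum>p=1..length t. \<Sum>js\<in>PJ t. elemF f a b (t @ [(p, Tau)]) js x / 2 ^ K t)"
  proof -
    have "(\<Sum>t'\<in>TA n'. F t') = (\<Sum>i\<in>(SIGMA t:TT n'. {1..length t}). F (fst i @ [(snd i, Tau)]))"
      unfolding TA_def by (subst sum.reindex[OF TA_inj]) (simp add: split_def)
    also have "\<dots> = (\<Sum>t\<in>TT n'. \<Sum>p=1..length t. F (t @ [(p, Tau)]))"
      using TT_fin by (subst sum.Sigma) (auto simp: split_def)
    also have "\<dots> = (\<Sum>t\<in>TT n'. \<Sum>p=1..length t. \<Sum>js\<in>PJ t. elemF f a b (t @ [(p, Tau)]) js x / 2 ^ K t)"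
      by (simp add: F_def PJ_def s_tau K_def)
    finally show ?thesis .
  qed
  also have "(\<Sum>t'\<in>SG n'. F t') = (\<Sum>t\<in>TT n'. \<Sum>q=1..length t. \<Sum>p=1..length t. \<Sum>j\<in>UNIV. \<Sum>js\<in>PJ t.
        elemF f a b (t @ [(q, Sigma (K t+1)), (p, Sigma (K t+1))]) (js(K t+1 := j)) x / (2 * 2 ^ K t))"
  proof -
    have "(\<Sum>t'\<in>SG n'. F t') = (\<Sum>i\<in>(SIGMA t:TT n'. {1..length t} \<times> {1..length t}).
        F (fst i @ [(fst (snd i), Sigma (s_nodes (fst i) div 2 + 1)), (snd (snd i), Sigma (s_nodes (fst i) div 2 + 1))]))"
      unfolding SG_def by (subst sum.reindex[OF SG_inj]) (simp add: split_def)
    also have "\<dots> = (\<Sum>t\<in>TT n'. \<Sum>pq\<in>{1..length t} \<times> {1..length t}.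
        F (t @ [(fst pq, Sigma (K t + 1)), (snd pq, Sigma (K t + 1))]))"
      using TT_fin by (subst sum.Sigma) (auto simp: split_def K_def)
    also have "\<dots> = (\<Sum>t\<in>TT n'. \<Sum>q=1..length t. \<Sum>p=1..length t.
        F (t @ [(q, Sigma (K t + 1)), (p, Sigma (K t + 1))]))"
      by (simp add: sum.cartesian_product split_def)
    also have "\<dots> = (\<Sum>t\<in>TT n'. \<Sum>q=1..length t. \<Sum>p=1..length t. \<Sum>j\<in>UNIV. \<Sum>js\<in>PJ t.
        elemF f a b (t @ [(q, Sigma (K t+1)), (p, Sigma (K t+1))]) (js(K t+1 := j)) x / (2 * 2 ^ K t))"
      by (simp add: F_def PJ_sig sum_PJ_sig sum_PJ_sig' s_sig K_def PJ_def)
    finally show ?thesis .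
  qed
  finally show ?thesis unfolding LHS by (simp add: sum.distrib)
qed




lemma SS_0: "SS f a b 0 x = f x"
proof -
  have s0: "s_nodes [(0, Gamma)] = 0" by (simp add: s_nodes_def)
  have pj: "PJ [(0, Gamma)] = {\<lambda>_. undefined}" by (simp add: PJ_def s0)
  have "elemF f a b [(0, Gamma)] js x = f x" for js
    unfolding elemF_def by (simp add: children_beyond dapp_nil)
  then show ?thesis by (simp add: SS_def TT_0 pj s0)
qed

theorem mainTheorem3:
  fixes f :: "real^'d::finite \<Rightarrow> real"
    and a :: "real^'d \<Rightarrow> real^'d"
    and b :: "real^'d \<Rightarrow> real^'m::finite^'d"
    and n :: nat and x0 :: "real^'d"
  assumes "Ck (2 * n) f"
    and "\<forall>I. Ck (2 * n) (\<lambda>y. a y $ I)"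
    and "\<forall>k j. Ck (2 * n) (\<lambda>y. b y $ k $ j)"
  shows "(L0 a b ^^ n) f x0 =
    (\<Sum>t \<in> {t \<in> LTS. rho t = n}. \<Sum>js \<in> {1..s_nodes t div 2} \<rightarrow>\<^sub>E UNIV.
        elemF f a b t js x0 / 2 ^ (s_nodes t div 2))"
proof -
  have key: "n' \<le> n \<Longrightarrow> (L0 a b ^^ n') f = SS f a b n'" for n'
  proof (induction n')
    case 0 then show ?case by (simp add: fun_eq_iff SS_0)
  next
    case (Suc n')
    then have ih: "(L0 a b ^^ n') f = SS f a b n'" by simp
    have "(L0 a b ^^ Suc n') f = L0 a b ((L0 a b ^^ n') f)" by simp
    also have "\<dots> = L0 a b (SS f a b n')" by (simp only: ih)
    also have "\<dots> = SS f a b (Suc n')" by (rule ext) (rule SS_step[OF assms Suc.prems])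
    finally show ?case .
  qed
  show ?thesis using key[of n] by (simp add: SS_def TT_def PJ_def)
qed


end
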